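(* Let $x:M^n\to\mathbb{R}^{n+1}$ be a locally strongly convex centroaffine hypersurface, and suppose there is a non-constant smooth function $\mu$ on $M^n$ such that $(\hat\nabla_ZK)(X,Y)=\mu\big(h(X,Y)Z+h(X,Z)Y+h(Y,Z)X\big)$ for all tangent vectors $X,Y,Z$ at every point. Let $p\in M^n$ be a point with $d\mu_p\ne0$, and let $\{e_1,\dots,e_n\}$ be an $h$-orthonormal basis of $T_pM^n$ such that $e_1$ maximizes $f(u)=h(K_uu,u)$ over the $h$-unit vectors $u\in T_pM^n$, $K_{e_1}e_i=\lambda_ie_i$ for all $i$, and $\lambda_1\ge2\lambda_i$ for $i\ge2$ (with $f(e_i)=0$ if $\lambda_1=2\lambda_i$). Then $$K_{e_1}e_1=\lambda_1e_1,\quad K_{e_1}e_i=\lambda_ie_i,\quad K_{e_i}e_j=\lambda_i\delta_{ij}e_1,\quad i,j=2,\dots,n.$$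
   Context: A centroaffine hypersurface is an immersion $x:M^n\to\mathbb{R}^{n+1}$ whose position vector is everywhere transversal to the tangent space; with $D$ the flat connection of $\mathbb{R}^{n+1}$, $D_Xx_*(Y)=x_*(\nabla_XY)+h(X,Y)(-\varepsilon x)$, $\varepsilon=\pm1$, defines the induced connection $\nabla$ and centroaffine metric $h$. Locally strongly convex means $h$ definite, and $\varepsilon$ is chosen so that $h$ is positive definite. $\hat\nabla$ is the Levi-Civita connection of $h$ and $K_XY=\nabla_XY-\hat\nabla_XY$ the difference tensor. *)

theory Defs
  imports "HOL-Analysis.Analysis"
begin

text \<open>Local chart model: the hypersurface is given on an open set U of real^'n
  (coordinates on M^n); tangent vectors at a point are elements of real^'n.\<close>

definition dd :: "('a::real_normed_vector \<Rightarrow> 'b::real_normed_vector) \<Rightarrow> 'a \<Rightarrow> 'a \<Rightarrow> 'b" where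
  "dd F v = (\<lambda>p. frechet_derivative F (at p) v)"

fun iter_dd :: "('a::real_normed_vector \<Rightarrow> 'b::real_normed_vector) \<Rightarrow> 'a list \<Rightarrow> 'a \<Rightarrow> 'b" where
  "iter_dd F [] = F"
| "iter_dd F (v # vs) = dd (iter_dd F vs) v"

definition smooth_on :: "'a::real_normed_vector set \<Rightarrow> ('a \<Rightarrow> 'b::real_normed_vector) \<Rightarrow> bool" where
  "smooth_on U F \<longleftrightarrow> (\<forall>vs. iter_dd F vs differentiable_on U)"

text \<open>Difference tensor K = nabla - hat nabla.\<close>
definition diffK :: "('a \<Rightarrow> 'a \<Rightarrow> 'a \<Rightarrow> 'a::real_vector) \<Rightarrow> ('a \<Rightarrow> 'a \<Rightarrow> 'a \<Rightarrow> 'a) \<Rightarrow> 'a \<Rightarrow> 'a \<Rightarrow> 'a \<Rightarrow> 'a" where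
  "diffK Gam Gh p X Y = Gam p X Y - Gh p X Y"

text \<open>(hat nabla_Z K)(X,Y) at p, computed with the constant (coordinate) extensions of X, Y.\<close>
definition covK :: "('a::real_normed_vector \<Rightarrow> 'a \<Rightarrow> 'a \<Rightarrow> 'a) \<Rightarrow> ('a \<Rightarrow> 'a \<Rightarrow> 'a \<Rightarrow> 'a) \<Rightarrow> 'a \<Rightarrow> 'a \<Rightarrow> 'a \<Rightarrow> 'a \<Rightarrow> 'a" where
  "covK Gam Gh p Z X Y =
     frechet_derivative (\<lambda>q. diffK Gam Gh q X Y) (at p) Z + Gh p Z (diffK Gam Gh p X Y)
     - diffK Gam Gh p (Gh p Z X) Y - diffK Gam Gh p X (Gh p Z Y)"

end

theory Submission
  imports Defs
begin


lemma line_deriv: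
  fixes G :: "'a::real_normed_vector \<Rightarrow> 'b::real_normed_vector"
  assumes "G differentiable at (c + u *\<^sub>R v)"
  shows "((\<lambda>u. G (c + u *\<^sub>R v)) has_derivative
          (\<lambda>t. t *\<^sub>R frechet_derivative G (at (c + u *\<^sub>R v)) v)) (at u within S)"
proof -
  have l: "linear (frechet_derivative G (at (c + u *\<^sub>R v)))"
    using assms frechet_derivative_works has_derivative_linear by blast
  have "((\<lambda>u. c + u *\<^sub>R v) has_derivative (\<lambda>t. t *\<^sub>R v)) (at u within S)"
    by (auto intro!: derivative_eq_intros)
  moreover have "(G has_derivative frechet_derivative G (at (c + u *\<^sub>R v))) (at (c + u *\<^sub>R v) within (\<lambda>u. c + u *\<^sub>R v) ` S)"
    using assms frechet_derivative_works has_derivative_subset[OF _ subset_UNIV] by blast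
  ultimately have "((\<lambda>u. G (c + u *\<^sub>R v)) has_derivative
          (\<lambda>t. frechet_derivative G (at (c + u *\<^sub>R v)) (t *\<^sub>R v))) (at u within S)"
    using diff_chain_within by (auto simp add: o_def)
  then show ?thesis using l by (simp add: linear_scale)
qed

lemma schwarz_rep:
  fixes G :: "'a::real_normed_vector \<Rightarrow> real"
  assumes s: "s \<ge> 0"
    and inU: "\<And>a b. a \<in> {0..s} \<Longrightarrow> b \<in> {0..s} \<Longrightarrow> p + a *\<^sub>R v + b *\<^sub>R w \<in> U"
    and d0: "\<And>q. q\<in>U \<Longrightarrow> G differentiable at q"
    and dv: "\<And>q. q\<in>U \<Longrightarrow> dd G v differentiable at q"
  shows "\<exists>a\<in>{0..s}. \<exists>b\<in>{0..s}. G (p + s *\<^sub>R v + s *\<^sub>R w) - G (p + s *\<^sub>R v) - G (p + s *\<^sub>R w) + G p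
          = s * s * dd (dd G v) w (p + a *\<^sub>R v + b *\<^sub>R w)"
proof -
  define g where "g u = G ((p + s *\<^sub>R w) + u *\<^sub>R v) - G (p + u *\<^sub>R v)" for u
  have "\<exists>a\<in>{0..s}. g s - g 0 = (\<lambda>t. t * (dd G v ((p + s *\<^sub>R w) + a *\<^sub>R v) - dd G v (p + a *\<^sub>R v))) (s - 0)"
  proof (rule mvt_very_simple[OF s])
    fix u assume u: "0 \<le> u" "u \<le> s"
    have 1: "G differentiable at ((p + s *\<^sub>R w) + u *\<^sub>R v)"
      using d0 inU[of u s] u s by (simp add: algebra_simps)
    have 2: "G differentiable at (p + u *\<^sub>R v)"
      using d0 inU[of u 0] u s by (simp add: algebra_simps)
    show "(g has_derivative (\<lambda>t. t * (dd G v ((p + s *\<^sub>R w) + u *\<^sub>R v) - dd G v (p + u *\<^sub>R v)))) (at u within {0..s})"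
      unfolding g_def dd_def
      using has_derivative_diff[OF line_deriv[OF 1] line_deriv[OF 2]]
      by (simp add: right_diff_distrib)
  qed
  then obtain a where a: "a \<in> {0..s}" and ga: "g s - g 0 = s * (dd G v ((p + s *\<^sub>R w) + a *\<^sub>R v) - dd G v (p + a *\<^sub>R v))"
    by auto
  define k where "k t = dd G v ((p + a *\<^sub>R v) + t *\<^sub>R w)" for t
  have "\<exists>b\<in>{0..s}. k s - k 0 = (\<lambda>t. t * dd (dd G v) w ((p + a *\<^sub>R v) + b *\<^sub>R w)) (s - 0)"
  proof (rule mvt_very_simple[OF s])
    fix u assume u: "0 \<le> u" "u \<le> s"
    have 1: "dd G v differentiable at ((p + a *\<^sub>R v) + u *\<^sub>R w)"
      using dv inU[of a u] u a by (simp add: algebra_simps)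
    show "(k has_derivative (\<lambda>t. t * dd (dd G v) w ((p + a *\<^sub>R v) + u *\<^sub>R w))) (at u within {0..s})"
      unfolding k_def
      using line_deriv[OF 1] by (simp add: dd_def[of "dd G v"])
  qed
  then obtain b where b: "b \<in> {0..s}" and kb: "k s - k 0 = s * dd (dd G v) w ((p + a *\<^sub>R v) + b *\<^sub>R w)"
    by auto
  have "G (p + s *\<^sub>R v + s *\<^sub>R w) - G (p + s *\<^sub>R v) - G (p + s *\<^sub>R w) + G p = g s - g 0"
    unfolding g_def by (simp add: add.commute add.left_commute)
  also have "\<dots> = s * (k s - k 0)"
    unfolding ga k_def by (simp add: add.commute add.left_commute)
  also have "\<dots> = s * s * dd (dd G v) w (p + a *\<^sub>R v + b *\<^sub>R w)"
    unfolding kb by simp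
  finally show ?thesis using a b by blast
qed

lemma schwarz_real:
  fixes G :: "'a::real_normed_vector \<Rightarrow> real"
  assumes U: "open U" "p \<in> U"
    and d0: "\<And>q. q\<in>U \<Longrightarrow> G differentiable at q"
    and dv: "\<And>q. q\<in>U \<Longrightarrow> dd G v differentiable at q"
    and dw: "\<And>q. q\<in>U \<Longrightarrow> dd G w differentiable at q"
    and cv: "continuous (at p) (dd (dd G v) w)"
    and cw: "continuous (at p) (dd (dd G w) v)"
  shows "dd (dd G v) w p = dd (dd G w) v p"
proof (rule ccontr)
  let ?A = "dd (dd G v) w p" and ?B = "dd (dd G w) v p"
  assume ne: "?A \<noteq> ?B"
  define e where "e = \<bar>?A - ?B\<bar> / 2"
  have e: "e > 0" using ne by (simp add: e_def)
  obtain d1 where d1: "d1 > 0" "\<And>q. dist q p < d1 \<Longrightarrow> dist (dd (dd G v) w q) ?A < e"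
    using cv e unfolding continuous_at_eps_delta by meson
  obtain d2 where d2: "d2 > 0" "\<And>q. dist q p < d2 \<Longrightarrow> dist (dd (dd G w) v q) ?B < e"
    using cw e unfolding continuous_at_eps_delta by meson
  obtain d3 where d3: "d3 > 0" "ball p d3 \<subseteq> U"
    using openE[OF U(1) U(2)] by blast
  define d where "d = min d1 (min d2 d3)"
  have d: "d > 0" using d1 d2 d3 by (simp add: d_def)
  define s where "s = d / (2 * (norm v + norm w + 1))"
  have pos: "0 < 2 * (norm v + norm w + 1)" by (smt (verit) norm_ge_zero)
  have s: "s > 0" using d pos by (simp add: s_def)
  have close: "dist (p + a *\<^sub>R v + b *\<^sub>R w) p < d" if "a \<in> {0..s}" "b \<in> {0..s}" for a b
  proof -
    have "dist (p + a *\<^sub>R v + b *\<^sub>R w) p = norm (a *\<^sub>R v + b *\<^sub>R w)"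
      by (simp add: dist_norm)
    also have "\<dots> \<le> a * norm v + b * norm w"
    proof -
      have "norm (a *\<^sub>R v + b *\<^sub>R w) \<le> norm (a *\<^sub>R v) + norm (b *\<^sub>R w)" by (rule norm_triangle_ineq)
      also have "\<dots> = a * norm v + b * norm w" using that by simp
      finally show ?thesis .
    qed
    also have "\<dots> \<le> s * norm v + s * norm w"
      using that by (intro add_mono mult_right_mono) auto
    also have "\<dots> < s * (2 * (norm v + norm w + 1))"
    proof -
      have "norm v + norm w < 2 * (norm v + norm w + 1)" by (smt (verit) norm_ge_zero)
      from mult_strict_left_mono[OF this s] show ?thesis by (simp add: distrib_left)
    qed
    also have "\<dots> = d" using pos unfolding s_def by simp
    finally show ?thesis .
  qed
  have inU: "p + a *\<^sub>R v + b *\<^sub>R w \<in> U" if "a \<in> {0..s}" "b \<in> {0..s}" for a b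
    using close[OF that] d3 by (auto simp: d_def dist_commute)
  have inU': "p + a *\<^sub>R w + b *\<^sub>R v \<in> U" if "a \<in> {0..s}" "b \<in> {0..s}" for a b
    using inU[OF that(2,1)] by (simp add: algebra_simps)
  obtain a b where ab: "a \<in> {0..s}" "b \<in> {0..s}"
    and r1: "G (p + s *\<^sub>R v + s *\<^sub>R w) - G (p + s *\<^sub>R v) - G (p + s *\<^sub>R w) + G p
          = s * s * dd (dd G v) w (p + a *\<^sub>R v + b *\<^sub>R w)"
    using schwarz_rep[of s p v w U G, OF less_imp_le[OF s] inU d0 dv] by blast
  obtain a' b' where ab': "a' \<in> {0..s}" "b' \<in> {0..s}"
    and r2: "G (p + s *\<^sub>R w + s *\<^sub>R v) - G (p + s *\<^sub>R w) - G (p + s *\<^sub>R v) + G p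
          = s * s * dd (dd G w) v (p + a' *\<^sub>R w + b' *\<^sub>R v)"
    using schwarz_rep[of s p w v U G, OF less_imp_le[OF s] inU' d0 dw] by blast
  have eq: "dd (dd G v) w (p + a *\<^sub>R v + b *\<^sub>R w) = dd (dd G w) v (p + a' *\<^sub>R w + b' *\<^sub>R v)"
  proof -
    have pe: "p + s *\<^sub>R w + s *\<^sub>R v = p + s *\<^sub>R v + s *\<^sub>R w" by (simp add: algebra_simps)
    have "s * s * dd (dd G v) w (p + a *\<^sub>R v + b *\<^sub>R w) = s * s * dd (dd G w) v (p + a' *\<^sub>R w + b' *\<^sub>R v)"
      using r1 r2 unfolding pe by linarith
    then show ?thesis using s by simp
  qed
  have c1: "dist (dd (dd G v) w (p + a *\<^sub>R v + b *\<^sub>R w)) ?A < e"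
    using d1(2) close[OF ab] by (simp add: d_def)
  have c2: "dist (dd (dd G w) v (p + a' *\<^sub>R w + b' *\<^sub>R v)) ?B < e"
  proof -
    have pe: "p + a' *\<^sub>R w + b' *\<^sub>R v = p + b' *\<^sub>R v + a' *\<^sub>R w" by (simp add: algebra_simps)
    show ?thesis using d2(2) close[OF ab'(2,1)] unfolding pe by (simp add: d_def)
  qed
  have "\<bar>?A - ?B\<bar> < 2 * e"
    using c1 c2 eq unfolding dist_real_def by linarith
  then show False unfolding e_def by simp
qed

lemma dd_local:
  assumes "open U" "p \<in> U" "\<And>q. q \<in> U \<Longrightarrow> f q = g q" "f differentiable at p"
  shows "dd f v p = dd g v p"
  unfolding dd_def using frechet_derivative_transform_within_open[OF assms(4,1,2,3)] by simp

lemma diff_local: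
  assumes "open U" "p \<in> U" "\<And>q. q \<in> U \<Longrightarrow> f q = g q" "f differentiable at p"
  shows "g differentiable at p"
  using assms by (meson differentiable_def has_derivative_transform_within_open)

lemma dd_inner:
  assumes "F differentiable at q"
  shows "dd (\<lambda>q. F q \<bullet> b) v q = dd F v q \<bullet> b"
    and "(\<lambda>q. F q \<bullet> b) differentiable at q"
proof -
  have "((\<lambda>q. F q \<bullet> b) has_derivative (\<lambda>h. frechet_derivative F (at q) h \<bullet> b)) (at q)"
    using assms frechet_derivative_works has_derivative_inner_left by blast
  then show "dd (\<lambda>q. F q \<bullet> b) v q = dd F v q \<bullet> b" "(\<lambda>q. F q \<bullet> b) differentiable at q"
    unfolding dd_def by (auto dest: frechet_derivative_at[symmetric] simp: differentiable_def)
qed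

lemma cont_local:
  fixes f g :: "'a::metric_space \<Rightarrow> 'b::topological_space"
  assumes "open U" "p \<in> U" "\<And>q. q \<in> U \<Longrightarrow> f q = g q" "continuous (at p) f"
  shows "continuous (at p) g"
proof -
  obtain d where "d > 0" "ball p d \<subseteq> U" using assms(1,2) open_contains_ball by blast
  then show ?thesis
    using continuous_transform_within[of p UNIV f d g] assms(3,4)
    by (auto simp: dist_commute subset_iff)
qed

lemma schwarz:
  fixes F :: "'a::real_normed_vector \<Rightarrow> 'b::euclidean_space"
  assumes U: "open U" "p \<in> U"
    and d0: "\<And>q. q\<in>U \<Longrightarrow> F differentiable at q"
    and dv: "\<And>q. q\<in>U \<Longrightarrow> dd F v differentiable at q"
    and dw: "\<And>q. q\<in>U \<Longrightarrow> dd F w differentiable at q"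
    and cv: "continuous (at p) (dd (dd F v) w)"
    and cw: "continuous (at p) (dd (dd F w) v)"
  shows "dd (dd F v) w p = dd (dd F w) v p"
proof (rule euclidean_eqI)
  fix b :: 'b assume b: "b \<in> Basis"
  define G where "G q = F q \<bullet> b" for q
  have G1: "dd G u q = dd F u q \<bullet> b" if "q \<in> U" for u q
    unfolding G_def using dd_inner(1)[OF d0[OF that]] .
  have G0: "G differentiable at q" if "q \<in> U" for q
    unfolding G_def using dd_inner(2)[OF d0[OF that]] .
  have Gv: "dd G v differentiable at q" "dd (dd G v) w q = dd (dd F v) w q \<bullet> b" if "q \<in> U" for q
  proof -
    have e: "\<And>r. r \<in> U \<Longrightarrow> dd F v r \<bullet> b = dd G v r" using G1 by simp
    show "dd G v differentiable at q"
      using diff_local[OF U(1) that, of "\<lambda>r. dd F v r \<bullet> b" "dd G v"] e dd_inner(2)[OF dv[OF that]] by blast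
    show "dd (dd G v) w q = dd (dd F v) w q \<bullet> b"
      using dd_local[OF U(1) that, of "\<lambda>r. dd F v r \<bullet> b" "dd G v" w] e dd_inner[OF dv[OF that]] by simp
  qed
  have Gw: "dd G w differentiable at q" "dd (dd G w) v q = dd (dd F w) v q \<bullet> b" if "q \<in> U" for q
  proof -
    have e: "\<And>r. r \<in> U \<Longrightarrow> dd F w r \<bullet> b = dd G w r" using G1 by simp
    show "dd G w differentiable at q"
      using diff_local[OF U(1) that, of "\<lambda>r. dd F w r \<bullet> b" "dd G w"] e dd_inner(2)[OF dw[OF that]] by blast
    show "dd (dd G w) v q = dd (dd F w) v q \<bullet> b"
      using dd_local[OF U(1) that, of "\<lambda>r. dd F w r \<bullet> b" "dd G w" v] e dd_inner[OF dw[OF that]] by simp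
  qed
  have cv': "continuous (at p) (dd (dd G v) w)"
    by (rule cont_local[OF U, of "\<lambda>q. dd (dd F v) w q \<bullet> b"]) (use Gv(2) cv in \<open>auto intro: continuous_intros\<close>)
  have cw': "continuous (at p) (dd (dd G w) v)"
    by (rule cont_local[OF U, of "\<lambda>q. dd (dd F w) v q \<bullet> b"]) (use Gw(2) cw in \<open>auto intro: continuous_intros\<close>)
  have "dd (dd G v) w p = dd (dd G w) v p"
    by (rule schwarz_real[OF U G0 Gv(1) Gw(1) cv' cw'])
  then show "dd (dd F v) w p \<bullet> b = dd (dd F w) v p \<bullet> b"
    using Gv(2)[OF U(2)] Gw(2)[OF U(2)] by simp
qed




lemma iter_dd_dd: "iter_dd (dd F v) vs = iter_dd F (vs @ [v])"
  by (induction vs) auto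

lemma smooth_diff_at:
  assumes "smooth_on U F" "open U" "q \<in> U"
  shows "F differentiable at q"
proof -
  have "iter_dd F [] differentiable_on U" using assms(1) unfolding smooth_on_def by blast
  then show ?thesis using assms(2,3) by (simp add: differentiable_on_eq_differentiable_at)
qed

lemma smooth_dd:
  assumes "smooth_on U F"
  shows "smooth_on U (dd F v)"
  using assms unfolding smooth_on_def iter_dd_dd by blast

lemma schwarz_smooth:
  fixes F :: "'a::real_normed_vector \<Rightarrow> 'b::euclidean_space"
  assumes "smooth_on U F" "open U" "p \<in> U"
  shows "dd (dd F v) w p = dd (dd F w) v p"
proof (rule schwarz[OF assms(2,3)])
  show "\<And>q. q \<in> U \<Longrightarrow> F differentiable at q" using smooth_diff_at assms by blast
  show "\<And>q. q \<in> U \<Longrightarrow> dd F v differentiable at q" using smooth_diff_at smooth_dd assms by blast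
  show "\<And>q. q \<in> U \<Longrightarrow> dd F w differentiable at q" using smooth_diff_at smooth_dd assms by blast
  show "continuous (at p) (dd (dd F v) w)"
    using smooth_diff_at[OF smooth_dd[OF smooth_dd[OF assms(1)]] assms(2,3)] differentiable_imp_continuous_within by blast
  show "continuous (at p) (dd (dd F w) v)"
    using smooth_diff_at[OF smooth_dd[OF smooth_dd[OF assms(1)]] assms(2,3)] differentiable_imp_continuous_within by blast
qed

lemma deriv_app:
  fixes L :: "'a::real_normed_vector \<Rightarrow> 'c::euclidean_space \<Rightarrow> 'b::real_normed_vector" and V :: "'a \<Rightarrow> 'c"
  assumes U: "open U" "p \<in> U" and lin: "\<And>q. q \<in> U \<Longrightarrow> linear (L q)"
    and dL: "\<And>c. (\<lambda>q. L q c) differentiable at p" and dV: "V differentiable at p"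
  shows "((\<lambda>q. L q (V q)) has_derivative
      (\<lambda>w. L p (frechet_derivative V (at p) w) + frechet_derivative (\<lambda>q. L q (V p)) (at p) w)) (at p)"
proof -
  define V' where "V' = frechet_derivative V (at p)"
  define L' where "L' i = frechet_derivative (\<lambda>q. L q i) (at p)" for i
  have V': "(V has_derivative V') (at p)" unfolding V'_def using dV frechet_derivative_works by blast
  have L': "((\<lambda>q. L q i) has_derivative L' i) (at p)" for i unfolding L'_def using dL[of i] frechet_derivative_works by blast
  have rep: "L q c = (\<Sum>i\<in>Basis. (c \<bullet> i) *\<^sub>R L q i)" if "q \<in> U" for q c
  proof -
    have "L q c = L q (\<Sum>i\<in>Basis. (c \<bullet> i) *\<^sub>R i)" by (simp add: euclidean_representation)
    also have "\<dots> = (\<Sum>i\<in>Basis. (c \<bullet> i) *\<^sub>R L q i)"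
      using lin[OF that] by (simp add: linear_sum linear_scale)
    finally show ?thesis .
  qed
  have d1: "((\<lambda>q. \<Sum>i\<in>Basis. (V q \<bullet> i) *\<^sub>R L q i) has_derivative
      (\<lambda>w. \<Sum>i\<in>Basis. (V p \<bullet> i) *\<^sub>R L' i w + (V' w \<bullet> i) *\<^sub>R L p i)) (at p)"
    by (intro has_derivative_sum has_derivative_scaleR has_derivative_inner_left V' L')
  have d2: "((\<lambda>q. \<Sum>i\<in>Basis. (V p \<bullet> i) *\<^sub>R L q i) has_derivative
      (\<lambda>w. \<Sum>i\<in>Basis. (V p \<bullet> i) *\<^sub>R L' i w)) (at p)"
    by (intro has_derivative_sum has_derivative_scaleR_right L')
  have e2: "frechet_derivative (\<lambda>q. L q (V p)) (at p) = (\<lambda>w. \<Sum>i\<in>Basis. (V p \<bullet> i) *\<^sub>R L' i w)"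
    using has_derivative_transform_within_open[OF d2 U(1,2), of "\<lambda>q. L q (V p)"] rep
    by (metis frechet_derivative_at)
  have e3: "L p (V' w) = (\<Sum>i\<in>Basis. (V' w \<bullet> i) *\<^sub>R L p i)" for w using rep[OF U(2)] .
  have "((\<lambda>q. L q (V q)) has_derivative
      (\<lambda>w. \<Sum>i\<in>Basis. (V p \<bullet> i) *\<^sub>R L' i w + (V' w \<bullet> i) *\<^sub>R L p i)) (at p)"
    using has_derivative_transform_within_open[OF d1 U(1,2), of "\<lambda>q. L q (V q)"] rep by metis
  then show ?thesis unfolding e2 V'_def[symmetric] e3 by (simp add: sum.distrib add.commute)
qed

lemma dd_app:
  fixes L :: "'a::real_normed_vector \<Rightarrow> 'c::euclidean_space \<Rightarrow> 'b::real_normed_vector" and V :: "'a \<Rightarrow> 'c"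
  assumes U: "open U" "p \<in> U" and lin: "\<And>q. q \<in> U \<Longrightarrow> linear (L q)"
    and dL: "\<And>c. (\<lambda>q. L q c) differentiable at p" and dV: "V differentiable at p"
  shows "dd (\<lambda>q. L q (V q)) w p = L p (dd V w p) + dd (\<lambda>q. L q (V p)) w p"
    and "(\<lambda>q. L q (V q)) differentiable at p"
  using deriv_app[OF assms] unfolding dd_def
  by (auto dest: frechet_derivative_at[symmetric] simp: differentiable_def)




lemma dd_lin:
  assumes "F differentiable at q"
  shows "linear (\<lambda>v. dd F v q)"
  using assms unfolding dd_def
  using frechet_derivative_works has_derivative_linear by blast

lemma dd_works:
  assumes "F differentiable at q"
  shows "(F has_derivative (\<lambda>v. dd F v q)) (at q)"
  unfolding dd_def by (metis assms frechet_derivative_works)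

lemma dd_eqI:
  assumes "(F has_derivative F') (at q)"
  shows "dd F v q = F' v"
  using frechet_derivative_at[OF assms] unfolding dd_def by simp

lemma dd_add:
  assumes "f differentiable at q" "g differentiable at q"
  shows "dd (\<lambda>r. f r + g r) v q = dd f v q + dd g v q"
  by (rule dd_eqI) (intro has_derivative_add dd_works assms)

lemma dd_diff:
  assumes "f differentiable at q" "g differentiable at q"
  shows "dd (\<lambda>r. f r - g r) v q = dd f v q - dd g v q"
  by (rule dd_eqI) (intro has_derivative_diff dd_works assms)

lemma dd_scale:
  fixes f :: "'a::real_normed_vector \<Rightarrow> real" and g :: "'a \<Rightarrow> 'b::real_normed_vector"
  assumes "f differentiable at q" "g differentiable at q"
  shows "dd (\<lambda>r. f r *\<^sub>R g r) v q = f q *\<^sub>R dd g v q + dd f v q *\<^sub>R g q"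
  by (rule dd_eqI) (intro has_derivative_scaleR dd_works assms)

lemma dd_scale_const:
  fixes f :: "'a::real_normed_vector \<Rightarrow> 'b::real_normed_vector"
  assumes "f differentiable at q"
  shows "dd (\<lambda>r. c *\<^sub>R f r) v q = c *\<^sub>R dd f v q"
  by (rule dd_eqI) (intro has_derivative_scaleR_right dd_works assms)

lemma dd_scale_const2:
  fixes f :: "'a::real_normed_vector \<Rightarrow> real"
  assumes "f differentiable at q"
  shows "dd (\<lambda>r. f r *\<^sub>R c) v q = dd f v q *\<^sub>R c"
  by (rule dd_eqI) (intro has_derivative_scaleR_left dd_works assms)

lemma smooth_sub:
  fixes f g :: "'a::real_normed_vector \<Rightarrow> 'b::real_normed_vector"
  assumes f: "smooth_on U f" and g: "smooth_on U g" and U: "open U"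
  shows "smooth_on U (\<lambda>q. f q - g q)"
proof -
  have eq: "\<forall>q\<in>U. iter_dd (\<lambda>q. f q - g q) vs q = iter_dd f vs q - iter_dd g vs q" for vs
  proof (induction vs)
    case Nil then show ?case by simp
  next
    case (Cons v vs)
    show ?case
    proof
      fix q assume q: "q \<in> U"
      have df: "iter_dd f vs differentiable at q" "iter_dd g vs differentiable at q"
        using f g q U unfolding smooth_on_def by (auto simp: differentiable_on_eq_differentiable_at)
      have "dd (\<lambda>r. iter_dd f vs r - iter_dd g vs r) v q = dd (iter_dd (\<lambda>q. f q - g q) vs) v q"
        by (rule dd_local[OF U q]) (use Cons df in auto)
      then show "iter_dd (\<lambda>q. f q - g q) (v # vs) q = iter_dd f (v # vs) q - iter_dd g (v # vs) q"
        using dd_diff[OF df] by simp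
    qed
  qed
  show ?thesis unfolding smooth_on_def
  proof
    fix vs
    show "iter_dd (\<lambda>q. f q - g q) vs differentiable_on U"
      unfolding differentiable_on_eq_differentiable_at[OF U]
    proof
      fix q assume q: "q \<in> U"
      have df: "iter_dd f vs differentiable at q" "iter_dd g vs differentiable at q"
        using f g q U unfolding smooth_on_def by (auto simp: differentiable_on_eq_differentiable_at)
      show "iter_dd (\<lambda>q. f q - g q) vs differentiable at q"
        by (rule diff_local[OF U q, of "\<lambda>r. iter_dd f vs r - iter_dd g vs r"]) (use eq df in auto)
    qed
  qed
qed




lemma ricci_alg:
  fixes G K :: "'a \<Rightarrow> 'a \<Rightarrow> 'a::real_vector" and h :: "'a \<Rightarrow> 'a \<Rightarrow> real"
    and dG dK dGam :: "'a \<Rightarrow> 'a \<Rightarrow> 'a \<Rightarrow> 'a" and dh :: "'a \<Rightarrow> 'a \<Rightarrow> 'a \<Rightarrow> real"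
    and mu eps :: real and T :: "'a \<Rightarrow> real" and C :: "'a \<Rightarrow> 'a \<Rightarrow> 'a \<Rightarrow> 'a"
  assumes Ga1: "\<And>a b c. G (a + b) c = G a c + G b c" and Ga2: "\<And>a b c. G c (a + b) = G c a + G c b"
    and Gs1: "\<And>r a c. G (r *\<^sub>R a) c = r *\<^sub>R G a c" and Gs2: "\<And>r a c. G c (r *\<^sub>R a) = r *\<^sub>R G c a"
    and Ka1: "\<And>a b c. K (a + b) c = K a c + K b c" and Ka2: "\<And>a b c. K c (a + b) = K c a + K c b"
    and Ks1: "\<And>r a c. K (r *\<^sub>R a) c = r *\<^sub>R K a c" and Ks2: "\<And>r a c. K c (r *\<^sub>R a) = r *\<^sub>R K c a"
    and ha1: "\<And>a b c. h (a + b) c = h a c + h b c" and ha2: "\<And>a b c. h c (a + b) = h c a + h c b"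
    and hs1: "\<And>r a c. h (r *\<^sub>R a) c = r * h a c" and hs2: "\<And>r a c. h c (r *\<^sub>R a) = r * h c a"
    and Gsym: "\<And>a b. G a b = G b a" and Ksym: "\<And>a b. K a b = K b a" and hsym: "\<And>a b. h a b = h b a"
    and C_def: "\<And>W A B. C W A B = h A B *\<^sub>R W + h A W *\<^sub>R B + h B W *\<^sub>R A"
    and r1: "\<And>W A B. dK W A B = mu *\<^sub>R C W A B - G W (K A B) + K (G W A) B + K A (G W B)"
    and r2: "\<And>W A B. dG W A B = dGam W A B - dK W A B"
    and r3: "\<And>W Z V. dGam W Z V + (G W (G Z V + K Z V) + K W (G Z V + K Z V)) - (eps * h Z V) *\<^sub>R W
             = dGam Z W V + (G Z (G W V + K W V) + K Z (G W V + K W V)) - (eps * h W V) *\<^sub>R Z"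
    and r4: "\<And>W A B. dh W A B = h (G W A) B + h A (G W B)"
    and r5: "G Z (dK W X Y) + dG W Z (K X Y) - K (dG W Z X) Y - dK W (G Z X) Y - K X (dG W Z Y) - dK W X (G Z Y)
          - (G W (dK Z X Y) + dG Z W (K X Y) - K (dG Z W X) Y - dK Z (G W X) Y - K X (dG Z W Y) - dK Z X (G W Y))
        = (T W *\<^sub>R C Z X Y + mu *\<^sub>R (dh W X Y *\<^sub>R Z + dh W X Z *\<^sub>R Y + dh W Y Z *\<^sub>R X))
          - (T Z *\<^sub>R C W X Y + mu *\<^sub>R (dh Z X Y *\<^sub>R W + dh Z X W *\<^sub>R Y + dh Z Y W *\<^sub>R X))"
  shows "(\<lambda>V. (eps * h Z V) *\<^sub>R W - (eps * h W V) *\<^sub>R Z - K W (K Z V) + K Z (K W V)) (K X Y)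
       - K ((\<lambda>V. (eps * h Z V) *\<^sub>R W - (eps * h W V) *\<^sub>R Z - K W (K Z V) + K Z (K W V)) X) Y
       - K X ((\<lambda>V. (eps * h Z V) *\<^sub>R W - (eps * h W V) *\<^sub>R Z - K W (K Z V) + K Z (K W V)) Y)
       = T W *\<^sub>R C Z X Y - T Z *\<^sub>R C W X Y"
proof -
  have Gm1: "\<And>a c. G (- a) c = - G a c" using Gs1[where r="-1"] by simp
  have Gm2: "\<And>a c. G c (- a) = - G c a" using Gs2[where r="-1"] by simp
  have Km1: "\<And>a c. K (- a) c = - K a c" using Ks1[where r="-1"] by simp
  have Km2: "\<And>a c. K c (- a) = - K c a" using Ks2[where r="-1"] by simp
  have hm1: "\<And>a c. h (- a) c = - h a c" using hs1[where r="-1"] by simp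
  have hm2: "\<And>a c. h c (- a) = - h c a" using hs2[where r="-1"] by simp
  have Gd1: "\<And>a b c. G (a - b) c = G a c - G b c" using Ga1 Gm1 by (metis diff_conv_add_uminus)
  have Gd2: "\<And>a b c. G c (a - b) = G c a - G c b" using Ga2 Gm2 by (metis diff_conv_add_uminus)
  have Kd1: "\<And>a b c. K (a - b) c = K a c - K b c" using Ka1 Km1 by (metis diff_conv_add_uminus)
  have Kd2: "\<And>a b c. K c (a - b) = K c a - K c b" using Ka2 Km2 by (metis diff_conv_add_uminus)
  have hd1: "\<And>a b c. h (a - b) c = h a c - h b c" using ha1 hm1 by (metis diff_conv_add_uminus)
  have hd2: "\<And>a b c. h c (a - b) = h c a - h c b" using ha2 hm2 by (metis diff_conv_add_uminus)
  note lin = Ga1 Ga2 Gs1 Gs2 Ka1 Ka2 Ks1 Ks2 ha1 ha2 hs1 hs2 Gm1 Gm2 Km1 Km2 hm1 hm2 Gd1 Gd2 Kd1 Kd2 hd1 hd2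
  have A: "dG W Z V - dG Z W V = G Z (G W V) - G W (G Z V) + ((eps * h Z V) *\<^sub>R W - (eps * h W V) *\<^sub>R Z - K W (K Z V) + K Z (K W V))" for W Z V
  proof -
    have "dGam W Z V - dGam Z W V = (G Z (G W V + K W V) + K Z (G W V + K W V)) - (eps * h W V) *\<^sub>R Z
       - (G W (G Z V + K Z V) + K W (G Z V + K Z V)) + (eps * h Z V) *\<^sub>R W"
      using r3[of W Z V] by (simp add: algebra_simps)
    then show ?thesis unfolding r2 r1 C_def
      by (simp add: lin algebra_simps Gsym[of Z W] hsym[of V] hsym[of Z W] Ksym[of _ V])
  qed
  have A': "dG W Z V = dG Z W V + (G Z (G W V) - G W (G Z V) + ((eps * h Z V) *\<^sub>R W - (eps * h W V) *\<^sub>R Z - K W (K Z V) + K Z (K W V)))" for V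
    using A[of W Z V] by (simp add: algebra_simps)
  have key: "(G Z (dK W X Y) + dG W Z (K X Y) - K (dG W Z X) Y - dK W (G Z X) Y - K X (dG W Z Y) - dK W X (G Z Y)
          - (G W (dK Z X Y) + dG Z W (K X Y) - K (dG Z W X) Y - dK Z (G W X) Y - K X (dG Z W Y) - dK Z X (G W Y)))
        - ((T W *\<^sub>R C Z X Y + mu *\<^sub>R (dh W X Y *\<^sub>R Z + dh W X Z *\<^sub>R Y + dh W Y Z *\<^sub>R X))
          - (T Z *\<^sub>R C W X Y + mu *\<^sub>R (dh Z X Y *\<^sub>R W + dh Z X W *\<^sub>R Y + dh Z Y W *\<^sub>R X)))
     = ((\<lambda>V. (eps * h Z V) *\<^sub>R W - (eps * h W V) *\<^sub>R Z - K W (K Z V) + K Z (K W V)) (K X Y)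
       - K ((\<lambda>V. (eps * h Z V) *\<^sub>R W - (eps * h W V) *\<^sub>R Z - K W (K Z V) + K Z (K W V)) X) Y
       - K X ((\<lambda>V. (eps * h Z V) *\<^sub>R W - (eps * h W V) *\<^sub>R Z - K W (K Z V) + K Z (K W V)) Y))
       - (T W *\<^sub>R C Z X Y - T Z *\<^sub>R C W X Y)"
    unfolding A' r1 r4 C_def
    by (simp add: lin algebra_simps Gsym Ksym hsym)
  show ?thesis using key r5 by simp
qed


lemma onb_expand:
  fixes hh :: "real^'n \<Rightarrow> real^'n \<Rightarrow> real" and e :: "nat \<Rightarrow> real^'n"
  assumes lin1: "\<And>c. linear (\<lambda>v. hh v c)" and lin2: "\<And>c. linear (hh c)"
    and pos: "\<And>v. v \<noteq> 0 \<Longrightarrow> hh v v > 0"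
    and orth: "\<And>i j. i \<in> {1..CARD('n)} \<Longrightarrow> j \<in> {1..CARD('n)} \<Longrightarrow> hh (e i) (e j) = (if i = j then 1 else 0)"
  shows "v = (\<Sum>k\<in>{1..CARD('n)}. hh v (e k) *\<^sub>R e k)"
proof -
  define n where "n = CARD('n)"
  define E where "E = e ` {1..n}"
  have inj: "inj_on e {1..n}"
  proof (rule inj_onI)
    fix i j assume ij: "i \<in> {1..n}" "j \<in> {1..n}" "e i = e j"
    have a: "hh (e i) (e j) = (if i = j then 1 else 0)" using orth ij unfolding n_def by blast
    have b: "hh (e j) (e j) = 1" using orth ij unfolding n_def by simp
    show "i = j" using a b ij(3) by (auto split: if_splits)
  qed
  have cardE: "card E = n" unfolding E_def using card_image[OF inj] by simp
  have indep: "independent E"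
    unfolding dependent_explicit not_ex
  proof (intro allI notI, elim conjE bexE)
    fix T u w
    assume T: "finite T" "T \<subseteq> E" and s: "(\<Sum>v\<in>T. u v *\<^sub>R v) = 0" and w: "w \<in> T" and uw: "u w \<noteq> 0"
    have "hh (\<Sum>v\<in>T. u v *\<^sub>R v) w = (\<Sum>v\<in>T. hh (u v *\<^sub>R v) w)"
      by (rule linear_sum[OF lin1[of w]])
    also have "\<dots> = (\<Sum>v\<in>T. u v * hh v w)"
      using linear_scale[OF lin1[of w]] by simp
    also have "\<dots> = (\<Sum>v\<in>T. if v = w then u v else 0)"
    proof (rule sum.cong)
      fix v assume v: "v \<in> T"
      obtain i j where i: "i \<in> {1..n}" "v = e i" and j: "j \<in> {1..n}" "w = e j"
        using v w T unfolding E_def by blast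
      show "u v * hh v w = (if v = w then u v else 0)"
        using orth[of i j] orth[of j j] i j unfolding n_def by auto
    qed simp
    also have "\<dots> = u w" using w T by (simp add: sum.delta')
    finally show False using s uw linear_0[OF lin1[of w]] by simp
  qed
  have span: "UNIV \<subseteq> span E"
    by (rule card_ge_dim_independent[OF _ indep]) (simp_all add: cardE n_def)
  define w where "w = v - (\<Sum>k\<in>{1..n}. hh v (e k) *\<^sub>R e k)"
  have we: "hh w u = 0" if uE: "u \<in> E" for u
  proof -
    obtain j where j: "j \<in> {1..n}" "u = e j" using uE unfolding E_def by blast
    have s1: "hh (\<Sum>k\<in>{1..n}. hh v (e k) *\<^sub>R e k) u = (\<Sum>k\<in>{1..n}. hh (hh v (e k) *\<^sub>R e k) u)"
      by (rule linear_sum[OF lin1[of u]])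
    have "hh w u = hh v u - (\<Sum>k\<in>{1..n}. hh v (e k) * hh (e k) u)"
      unfolding w_def linear_diff[OF lin1[of u]] s1 using linear_scale[OF lin1[of u]] by simp
    also have "(\<Sum>k\<in>{1..n}. hh v (e k) * hh (e k) u) = (\<Sum>k\<in>{1..n}. if k = j then hh v (e k) else 0)"
      by (rule sum.cong) (use orth j n_def in auto)
    also have "\<dots> = hh v u" using j by (simp add: sum.delta')
    finally show ?thesis by simp
  qed
  have "hh w w = 0"
    using linear_eq_0_on_span[OF lin2[of w], of E w] we span by blast
  then have "w = 0" using pos by force
  then show ?thesis unfolding w_def n_def by simp
qed


locale ca =
  fixes U :: "(real^'n) set"
    and x :: "real^'n \<Rightarrow> real^'m"
    and eps :: real
    and h :: "real^'n \<Rightarrow> real^'n \<Rightarrow> real^'n \<Rightarrow> real"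
    and Gam Gh :: "real^'n \<Rightarrow> real^'n \<Rightarrow> real^'n \<Rightarrow> real^'n"
    and mu :: "real^'n \<Rightarrow> real"
  assumes U_open: "open U"
    and x_smooth: "smooth_on U x"
    and transversal: "\<And>q v c. q \<in> U \<Longrightarrow>
        frechet_derivative x (at q) v + c *\<^sub>R x q = 0 \<Longrightarrow> v = 0 \<and> c = 0"
    and eps_pm: "eps = 1 \<or> eps = -1"
    and structure_eq: "\<And>q X Y. q \<in> U \<Longrightarrow>
        frechet_derivative (\<lambda>r. frechet_derivative x (at r) Y) (at q) X
          = frechet_derivative x (at q) (Gam q X Y) + h q X Y *\<^sub>R (- eps *\<^sub>R x q)"
    and h_smooth: "\<And>X Y. smooth_on U (\<lambda>q. h q X Y)"
    and Gam_smooth: "\<And>X Y. smooth_on U (\<lambda>q. Gam q X Y)"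
    and Gh_smooth: "\<And>X Y. smooth_on U (\<lambda>q. Gh q X Y)"
    and h_posdef: "\<And>q X. q \<in> U \<Longrightarrow> X \<noteq> 0 \<Longrightarrow> h q X X > 0"
    and LC_torsionfree: "\<And>q X Y. q \<in> U \<Longrightarrow> Gh q X Y = Gh q Y X"
    and LC_metric: "\<And>q X Y Z. q \<in> U \<Longrightarrow>
        frechet_derivative (\<lambda>r. h r X Y) (at q) Z = h q (Gh q Z X) Y + h q X (Gh q Z Y)"
    and mu_smooth: "smooth_on U mu"
    and covK_eq: "\<And>q X Y Z. q \<in> U \<Longrightarrow>
        covK Gam Gh q Z X Y = mu q *\<^sub>R (h q X Y *\<^sub>R Z + h q X Z *\<^sub>R Y + h q Y Z *\<^sub>R X)"
begin

abbreviation "xd q \<equiv> frechet_derivative x (at q)"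

lemma eps_nz: "eps \<noteq> 0" using eps_pm by auto

lemma x_diff: "q \<in> U \<Longrightarrow> x differentiable at q"
  using smooth_diff_at[OF x_smooth U_open] by blast

lemma xd_lin: "q \<in> U \<Longrightarrow> linear (xd q)"
  using x_diff frechet_derivative_works has_derivative_linear by blast

lemma uniq:
  assumes q: "q \<in> U" and e: "xd q A + c *\<^sub>R x q = xd q B + d *\<^sub>R x q"
  shows "A = B \<and> c = d"
proof -
  have l: "xd q (A - B) = xd q A - xd q B" using linear_diff[OF xd_lin[OF q]] .
  have "xd q (A - B) + (c - d) *\<^sub>R x q = (xd q A + c *\<^sub>R x q) - (xd q B + d *\<^sub>R x q)"
    unfolding l by (simp add: algebra_simps)
  then have "xd q (A - B) + (c - d) *\<^sub>R x q = 0" using e by simp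
  from transversal[OF q this] show ?thesis by simp
qed

lemma struct: "q \<in> U \<Longrightarrow> dd (dd x Y) X q = xd q (Gam q X Y) + (- (eps * h q X Y)) *\<^sub>R x q"
  using structure_eq unfolding dd_def by simp

lemma smooth_x1: "smooth_on U (dd x Y)" using smooth_dd[OF x_smooth] .
lemma smooth_x2: "smooth_on U (dd (dd x Y) Z)" using smooth_dd[OF smooth_x1] .

lemma X2_dir: "q \<in> U \<Longrightarrow> linear (\<lambda>X. dd (dd x Y) X q)"
  using dd_lin smooth_diff_at[OF smooth_x1 U_open] by blast

lemma dx_comb: "q \<in> U \<Longrightarrow> dd x (a *\<^sub>R Y1 + b *\<^sub>R Y2) q = a *\<^sub>R dd x Y1 q + b *\<^sub>R dd x Y2 q"
  unfolding dd_def using xd_lin by (simp add: linear_add linear_scale)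

lemma X2_arg: "q \<in> U \<Longrightarrow> dd (dd x (a *\<^sub>R Y1 + b *\<^sub>R Y2)) X q = a *\<^sub>R dd (dd x Y1) X q + b *\<^sub>R dd (dd x Y2) X q"
proof -
  assume q: "q \<in> U"
  have d1: "dd x Y1 differentiable at q" "dd x Y2 differentiable at q"
    using smooth_diff_at[OF smooth_x1 U_open q] by auto
  have "dd (\<lambda>r. a *\<^sub>R dd x Y1 r + b *\<^sub>R dd x Y2 r) X q = dd (dd x (a *\<^sub>R Y1 + b *\<^sub>R Y2)) X q"
    by (rule dd_local[OF U_open q]) (use dx_comb d1 in auto)
  moreover have "dd (\<lambda>r. a *\<^sub>R dd x Y1 r + b *\<^sub>R dd x Y2 r) X q = a *\<^sub>R dd (dd x Y1) X q + b *\<^sub>R dd (dd x Y2) X q"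
    using d1 by (simp add: dd_add dd_scale_const)
  ultimately show ?thesis by simp
qed

lemma X2_sym: "q \<in> U \<Longrightarrow> dd (dd x Y) X q = dd (dd x X) Y q"
  using schwarz_smooth[OF x_smooth U_open] by blast

lemma decomp:
  assumes q: "q \<in> U"
    and e: "dd (dd x Y) X q = a *\<^sub>R dd (dd x Y1) X1 q + b *\<^sub>R dd (dd x Y2) X2 q"
  shows "Gam q X Y = a *\<^sub>R Gam q X1 Y1 + b *\<^sub>R Gam q X2 Y2 \<and> h q X Y = a * h q X1 Y1 + b * h q X2 Y2"
proof -
  have "xd q (Gam q X Y) + (- (eps * h q X Y)) *\<^sub>R x q
      = xd q (a *\<^sub>R Gam q X1 Y1 + b *\<^sub>R Gam q X2 Y2) + (- (eps * (a * h q X1 Y1 + b * h q X2 Y2))) *\<^sub>R x q"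
    using e unfolding struct[OF q] using xd_lin[OF q]
    by (simp add: linear_add linear_scale algebra_simps)
  from uniq[OF q this] eps_nz show ?thesis by simp
qed

lemma Gam_lin1: "q \<in> U \<Longrightarrow> Gam q (a *\<^sub>R X1 + b *\<^sub>R X2) Y = a *\<^sub>R Gam q X1 Y + b *\<^sub>R Gam q X2 Y"
  and h_lin1: "q \<in> U \<Longrightarrow> h q (a *\<^sub>R X1 + b *\<^sub>R X2) Y = a * h q X1 Y + b * h q X2 Y"
proof -
  assume q: "q \<in> U"
  have "dd (dd x Y) (a *\<^sub>R X1 + b *\<^sub>R X2) q = a *\<^sub>R dd (dd x Y) X1 q + b *\<^sub>R dd (dd x Y) X2 q"
    using linear_add[OF X2_dir[OF q, of Y]] linear_scale[OF X2_dir[OF q, of Y]] by simp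
  from decomp[OF q this] show "Gam q (a *\<^sub>R X1 + b *\<^sub>R X2) Y = a *\<^sub>R Gam q X1 Y + b *\<^sub>R Gam q X2 Y" by simp
next
  assume q: "q \<in> U"
  have "dd (dd x Y) (a *\<^sub>R X1 + b *\<^sub>R X2) q = a *\<^sub>R dd (dd x Y) X1 q + b *\<^sub>R dd (dd x Y) X2 q"
    using linear_add[OF X2_dir[OF q, of Y]] linear_scale[OF X2_dir[OF q, of Y]] by simp
  from decomp[OF q this] show "h q (a *\<^sub>R X1 + b *\<^sub>R X2) Y = a * h q X1 Y + b * h q X2 Y" by simp
qed

lemma Gam_lin2: "q \<in> U \<Longrightarrow> Gam q X (a *\<^sub>R Y1 + b *\<^sub>R Y2) = a *\<^sub>R Gam q X Y1 + b *\<^sub>R Gam q X Y2"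
  and h_lin2: "q \<in> U \<Longrightarrow> h q X (a *\<^sub>R Y1 + b *\<^sub>R Y2) = a * h q X Y1 + b * h q X Y2"
  using decomp[of q "a *\<^sub>R Y1 + b *\<^sub>R Y2" X a Y1 X b Y2 X] X2_arg[of q a Y1 b Y2 X]
  by auto

lemma Gam_sym: "q \<in> U \<Longrightarrow> Gam q X Y = Gam q Y X"
  and h_sym: "q \<in> U \<Longrightarrow> h q X Y = h q Y X"
  using decomp[of q Y X 1 X Y 0 X Y] X2_sym[of q Y X] by auto


lemma linear_from_comb:
  assumes "\<And>a b X Y. f (a *\<^sub>R X + b *\<^sub>R Y) = a *\<^sub>R f X + b *\<^sub>R f Y"
  shows "linear f"
proof (rule linearI)
  show "f (X + Y) = f X + f Y" for X Y using assms[of 1 X 1 Y] by simp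
  show "f (r *\<^sub>R X) = r *\<^sub>R f X" for r X using assms[of r X 0 X] by simp
qed

lemma dd_comb:
  fixes f g :: "'a::real_normed_vector \<Rightarrow> real"
  assumes "f differentiable at q" "g differentiable at q"
  shows "dd (\<lambda>r. a * f r + b * g r) v q = a * dd f v q + b * dd g v q"
  by (rule dd_eqI) (rule has_derivative_add[OF has_derivative_mult_right[OF dd_works[OF assms(1)]] has_derivative_mult_right[OF dd_works[OF assms(2)]]])

lemma dd_combR:
  fixes f g :: "'a::real_normed_vector \<Rightarrow> 'b::real_normed_vector"
  assumes "f differentiable at q" "g differentiable at q"
  shows "dd (\<lambda>r. a *\<^sub>R f r + b *\<^sub>R g r) v q = a *\<^sub>R dd f v q + b *\<^sub>R dd g v q"
  by (rule dd_eqI) (rule has_derivative_add[OF has_derivative_scaleR_right[OF dd_works[OF assms(1)]] has_derivative_scaleR_right[OF dd_works[OF assms(2)]]])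

lemma Gam_linear1: "q \<in> U \<Longrightarrow> linear (\<lambda>X. Gam q X Y)"
  by (rule linear_from_comb) (simp add: Gam_lin1)
lemma Gam_linear2: "q \<in> U \<Longrightarrow> linear (Gam q X)"
  by (rule linear_from_comb) (simp add: Gam_lin2)
lemma h_linear1: "q \<in> U \<Longrightarrow> linear (\<lambda>X. h q X Y)"
  by (rule linear_from_comb) (simp add: h_lin1)
lemma h_linear2: "q \<in> U \<Longrightarrow> linear (h q X)"
  by (rule linear_from_comb) (simp add: h_lin2)

lemma h_nondeg:
  assumes q: "q \<in> U" and e: "\<And>Z. h q u Z = h q v Z"
  shows "u = v"
proof (rule ccontr)
  assume "u \<noteq> v"
  then have "h q (u - v) (u - v) > 0" using h_posdef[OF q] by simp
  moreover have "h q (u - v) (u - v) = h q u (u - v) - h q v (u - v)"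
    using linear_diff[OF h_linear1[OF q, of "u - v"]] by simp
  ultimately show False using e by simp
qed

lemma h_diff: "q \<in> U \<Longrightarrow> (\<lambda>r. h r X Y) differentiable at q"
  using smooth_diff_at[OF h_smooth U_open] by blast
lemma Gam_diff: "q \<in> U \<Longrightarrow> (\<lambda>r. Gam r X Y) differentiable at q"
  using smooth_diff_at[OF Gam_smooth U_open] by blast
lemma Gh_diff: "q \<in> U \<Longrightarrow> (\<lambda>r. Gh r X Y) differentiable at q"
  using smooth_diff_at[OF Gh_smooth U_open] by blast
lemma mu_diff: "q \<in> U \<Longrightarrow> mu differentiable at q"
  using smooth_diff_at[OF mu_smooth U_open] by blast

lemma LC: "q \<in> U \<Longrightarrow> dd (\<lambda>r. h r X Y) Z q = h q (Gh q Z X) Y + h q X (Gh q Z Y)"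
  using LC_metric unfolding dd_def by simp

lemma dh_dir: "q \<in> U \<Longrightarrow> linear (\<lambda>Z. dd (\<lambda>r. h r X Y) Z q)"
  using dd_lin h_diff by blast

lemma dh_arg1: "q \<in> U \<Longrightarrow> dd (\<lambda>r. h r (a *\<^sub>R X1 + b *\<^sub>R X2) Y) Z q
    = a * dd (\<lambda>r. h r X1 Y) Z q + b * dd (\<lambda>r. h r X2 Y) Z q"
proof -
  assume q: "q \<in> U"
  have "dd (\<lambda>r. a * h r X1 Y + b * h r X2 Y) Z q = dd (\<lambda>r. h r (a *\<^sub>R X1 + b *\<^sub>R X2) Y) Z q"
    by (rule dd_local[OF U_open q]) (auto simp: h_lin1 h_diff q)
  then show ?thesis using dd_comb[OF h_diff[OF q] h_diff[OF q]] by simp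
qed

lemma dh_arg2: "q \<in> U \<Longrightarrow> dd (\<lambda>r. h r X (a *\<^sub>R Y1 + b *\<^sub>R Y2)) Z q
    = a * dd (\<lambda>r. h r X Y1) Z q + b * dd (\<lambda>r. h r X Y2) Z q"
proof -
  assume q: "q \<in> U"
  have "dd (\<lambda>r. a * h r X Y1 + b * h r X Y2) Z q = dd (\<lambda>r. h r X (a *\<^sub>R Y1 + b *\<^sub>R Y2)) Z q"
    by (rule dd_local[OF U_open q]) (auto simp: h_lin2 h_diff q)
  then show ?thesis using dd_comb[OF h_diff[OF q] h_diff[OF q]] by simp
qed

lemma koszul: "q \<in> U \<Longrightarrow> 2 * h q (Gh q X Y) Z
    = dd (\<lambda>r. h r Y Z) X q + dd (\<lambda>r. h r X Z) Y q - dd (\<lambda>r. h r X Y) Z q"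
  unfolding LC by (simp add: h_sym[of q "Gh q X Z"] h_sym[of q "Gh q Y Z"] LC_torsionfree[of q Z] LC_torsionfree[of q X Y])

lemma Gh_lin1: "q \<in> U \<Longrightarrow> Gh q (a *\<^sub>R X1 + b *\<^sub>R X2) Y = a *\<^sub>R Gh q X1 Y + b *\<^sub>R Gh q X2 Y"
proof -
  assume q: "q \<in> U"
  show ?thesis
  proof (rule h_nondeg[OF q])
    fix Z
    have "2 * h q (Gh q (a *\<^sub>R X1 + b *\<^sub>R X2) Y) Z
        = dd (\<lambda>r. h r Y Z) (a *\<^sub>R X1 + b *\<^sub>R X2) q + dd (\<lambda>r. h r (a *\<^sub>R X1 + b *\<^sub>R X2) Z) Y q
          - dd (\<lambda>r. h r (a *\<^sub>R X1 + b *\<^sub>R X2) Y) Z q"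
      by (rule koszul[OF q])
    also have "\<dots> = a * (dd (\<lambda>r. h r Y Z) X1 q + dd (\<lambda>r. h r X1 Z) Y q - dd (\<lambda>r. h r X1 Y) Z q)
        + b * (dd (\<lambda>r. h r Y Z) X2 q + dd (\<lambda>r. h r X2 Z) Y q - dd (\<lambda>r. h r X2 Y) Z q)"
      unfolding dh_arg1[OF q]
      using linear_add[OF dh_dir[OF q, of Y Z]] linear_scale[OF dh_dir[OF q, of Y Z]]
      by (simp add: algebra_simps)
    also have "\<dots> = a * (2 * h q (Gh q X1 Y) Z) + b * (2 * h q (Gh q X2 Y) Z)"
      unfolding koszul[OF q] ..
    also have "\<dots> = 2 * h q (a *\<^sub>R Gh q X1 Y + b *\<^sub>R Gh q X2 Y) Z"
      unfolding h_lin1[OF q] by (simp add: algebra_simps)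
    finally have "2 * h q (Gh q (a *\<^sub>R X1 + b *\<^sub>R X2) Y) Z = 2 * h q (a *\<^sub>R Gh q X1 Y + b *\<^sub>R Gh q X2 Y) Z" .
    then show "h q (Gh q (a *\<^sub>R X1 + b *\<^sub>R X2) Y) Z = h q (a *\<^sub>R Gh q X1 Y + b *\<^sub>R Gh q X2 Y) Z" by simp
  qed
qed

lemma Gh_lin2: "q \<in> U \<Longrightarrow> Gh q X (a *\<^sub>R Y1 + b *\<^sub>R Y2) = a *\<^sub>R Gh q X Y1 + b *\<^sub>R Gh q X Y2"
  using Gh_lin1 LC_torsionfree by metis

lemma Gh_linear1: "q \<in> U \<Longrightarrow> linear (\<lambda>X. Gh q X Y)"
  by (rule linear_from_comb) (simp add: Gh_lin1)
lemma Gh_linear2: "q \<in> U \<Longrightarrow> linear (Gh q X)"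
  by (rule linear_from_comb) (simp add: Gh_lin2)


lemma K_eq: "diffK Gam Gh q X Y = Gam q X Y - Gh q X Y"
  by (simp add: diffK_def)

lemma K_lin1: "q \<in> U \<Longrightarrow> diffK Gam Gh q (a *\<^sub>R X1 + b *\<^sub>R X2) Y = a *\<^sub>R diffK Gam Gh q X1 Y + b *\<^sub>R diffK Gam Gh q X2 Y"
  by (simp add: K_eq Gam_lin1 Gh_lin1 algebra_simps)
lemma K_lin2: "q \<in> U \<Longrightarrow> diffK Gam Gh q X (a *\<^sub>R Y1 + b *\<^sub>R Y2) = a *\<^sub>R diffK Gam Gh q X Y1 + b *\<^sub>R diffK Gam Gh q X Y2"
  by (simp add: K_eq Gam_lin2 Gh_lin2 algebra_simps)
lemma K_sym: "q \<in> U \<Longrightarrow> diffK Gam Gh q X Y = diffK Gam Gh q Y X"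
  by (simp add: K_eq Gam_sym[of q X Y] LC_torsionfree[of q X Y])
lemma K_linear1: "q \<in> U \<Longrightarrow> linear (\<lambda>X. diffK Gam Gh q X Y)"
  by (rule linear_from_comb) (simp add: K_lin1)
lemma K_linear2: "q \<in> U \<Longrightarrow> linear (diffK Gam Gh q X)"
  by (rule linear_from_comb) (simp add: K_lin2)
lemma K_smooth: "smooth_on U (\<lambda>q. diffK Gam Gh q X Y)"
  unfolding K_eq using smooth_sub[OF Gam_smooth Gh_smooth U_open] .
lemma K_diff: "q \<in> U \<Longrightarrow> (\<lambda>r. diffK Gam Gh r X Y) differentiable at q"
  using smooth_diff_at[OF K_smooth U_open] by blast

lemma third:
  assumes q: "q \<in> U"
  shows "dd (dd (dd x Y) Z) W q = xd q (dd (\<lambda>r. Gam r Z Y) W q + Gam q W (Gam q Z Y) - (eps * h q Z Y) *\<^sub>R W)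
      + (- (eps * h q W (Gam q Z Y)) - eps * dd (\<lambda>r. h r Z Y) W q) *\<^sub>R x q"
proof -
  have d2: "dd (dd x Y) Z differentiable at q" using smooth_diff_at[OF smooth_x2 U_open q] .
  have loc: "dd (dd (dd x Y) Z) W q = dd (\<lambda>r. xd r (Gam r Z Y) + (- (eps * h r Z Y)) *\<^sub>R x r) W q"
    by (rule dd_local[OF U_open q _ d2]) (simp add: struct)
  have dL: "(\<lambda>r. xd r c) differentiable at q" for c
    using smooth_diff_at[OF smooth_x1 U_open q, of c] unfolding dd_def .
  note app1 = dd_app(1)[OF U_open q xd_lin dL Gam_diff[OF q, of Z Y], where w=W]
  note app2 = dd_app(2)[OF U_open q xd_lin dL Gam_diff[OF q, of Z Y]]
  have A1: "dd (\<lambda>r. xd r (Gam r Z Y)) W q = xd q (dd (\<lambda>r. Gam r Z Y) W q)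
      + (xd q (Gam q W (Gam q Z Y)) + (- (eps * h q W (Gam q Z Y))) *\<^sub>R x q)"
  proof -
    have "dd (\<lambda>r. xd r (Gam q Z Y)) W q = dd (dd x (Gam q Z Y)) W q" unfolding dd_def ..
    then show ?thesis using app1 struct[OF q] by simp
  qed
  have hd: "(\<lambda>r. - (eps * h r Z Y)) differentiable at q" using h_diff[OF q] by simp
  have hd': "dd (\<lambda>r. - (eps * h r Z Y)) W q = - (eps * dd (\<lambda>r. h r Z Y) W q)"
    by (rule dd_eqI) (use has_derivative_mult_right[OF dd_works[OF h_diff[OF q]], of "- eps"] in simp)
  have A2: "dd (\<lambda>r. (- (eps * h r Z Y)) *\<^sub>R x r) W q = (- (eps * h q Z Y)) *\<^sub>R xd q W + (- (eps * dd (\<lambda>r. h r Z Y) W q)) *\<^sub>R x q"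
    using dd_scale[OF hd x_diff[OF q], of W] hd' unfolding dd_def[of x] by simp
  have sum: "dd (\<lambda>r. xd r (Gam r Z Y) + (- (eps * h r Z Y)) *\<^sub>R x r) W q
      = dd (\<lambda>r. xd r (Gam r Z Y)) W q + dd (\<lambda>r. (- (eps * h r Z Y)) *\<^sub>R x r) W q"
    by (rule dd_add) (use app2 differentiable_scaleR[OF hd x_diff[OF q]] in auto)
  have l: "linear (xd q)" using xd_lin[OF q] .
  show ?thesis unfolding loc sum A1 A2 linear_diff[OF l] linear_add[OF l] linear_scale[OF l]
    by (simp add: algebra_simps)
qed

lemma gauss_codazzi:
  assumes q: "q \<in> U"
  shows "dd (\<lambda>r. Gam r Z Y) W q + Gam q W (Gam q Z Y) - (eps * h q Z Y) *\<^sub>R W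
       = dd (\<lambda>r. Gam r W Y) Z q + Gam q Z (Gam q W Y) - (eps * h q W Y) *\<^sub>R Z"
    and "h q W (Gam q Z Y) + dd (\<lambda>r. h r Z Y) W q = h q Z (Gam q W Y) + dd (\<lambda>r. h r W Y) Z q"
proof -
  have "dd (dd (dd x Y) Z) W q = dd (dd (dd x Y) W) Z q"
    using schwarz_smooth[OF smooth_x1 U_open q] .
  note u = uniq[OF q this[unfolded third[OF q]]]
  show "dd (\<lambda>r. Gam r Z Y) W q + Gam q W (Gam q Z Y) - (eps * h q Z Y) *\<^sub>R W
       = dd (\<lambda>r. Gam r W Y) Z q + Gam q Z (Gam q W Y) - (eps * h q W Y) *\<^sub>R Z"
    using u by blast
  have "eps * (h q W (Gam q Z Y) + dd (\<lambda>r. h r Z Y) W q) = eps * (h q Z (Gam q W Y) + dd (\<lambda>r. h r W Y) Z q)"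
    using conjunct2[OF u] unfolding ring_distribs by linarith
  then show "h q W (Gam q Z Y) + dd (\<lambda>r. h r Z Y) W q = h q Z (Gam q W Y) + dd (\<lambda>r. h r W Y) Z q"
    using eps_nz by simp
qed

lemma K_tsym: "q \<in> U \<Longrightarrow> h q (diffK Gam Gh q Z Y) W = h q (diffK Gam Gh q W Y) Z"
proof -
  assume q: "q \<in> U"
  have c: "h q W (Gam q Z Y) + (h q (Gh q W Z) Y + h q Z (Gh q W Y)) = h q Z (Gam q W Y) + (h q (Gh q Z W) Y + h q W (Gh q Z Y))"
    using gauss_codazzi(2)[OF q, of W Z Y] unfolding LC[OF q] .
  have "h q W (diffK Gam Gh q Z Y) = h q Z (diffK Gam Gh q W Y)"
    unfolding K_eq using c linear_diff[OF h_linear2[OF q, of W]] linear_diff[OF h_linear2[OF q, of Z]]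
      LC_torsionfree[OF q, of W Z] by simp
  then show ?thesis using h_sym[OF q] by metis
qed


lemma cov_expand: "covK Gam Gh q Z X Y = dd (\<lambda>q. diffK Gam Gh q X Y) Z q + Gh q Z (diffK Gam Gh q X Y)
    - diffK Gam Gh q (Gh q Z X) Y - diffK Gam Gh q X (Gh q Z Y)"
  by (simp add: covK_def dd_def)

lemma dcov:
  assumes p: "p \<in> U"
  shows "dd (\<lambda>q. covK Gam Gh q Z X Y) W p = dd (dd (\<lambda>q. diffK Gam Gh q X Y) Z) W p
    + (Gh p Z (dd (\<lambda>q. diffK Gam Gh q X Y) W p) + dd (\<lambda>q. Gh q Z (diffK Gam Gh p X Y)) W p)
    - (diffK Gam Gh p (dd (\<lambda>q. Gh q Z X) W p) Y + dd (\<lambda>q. diffK Gam Gh q (Gh p Z X) Y) W p)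
    - (diffK Gam Gh p X (dd (\<lambda>q. Gh q Z Y) W p) + dd (\<lambda>q. diffK Gam Gh q X (Gh p Z Y)) W p)"
proof -
  have lin2: "\<And>q. q \<in> U \<Longrightarrow> linear (Gh q Z)" using Gh_linear2 by blast
  have lin3: "\<And>q. q \<in> U \<Longrightarrow> linear (\<lambda>v. diffK Gam Gh q v Y)" using K_linear1 by blast
  have lin4: "\<And>q. q \<in> U \<Longrightarrow> linear (diffK Gam Gh q X)" using K_linear2 by blast
  have dL2: "\<And>c. (\<lambda>q. Gh q Z c) differentiable at p" using Gh_diff[OF p] .
  have dL3: "\<And>c. (\<lambda>q. diffK Gam Gh q c Y) differentiable at p" using K_diff[OF p] .
  have dL4: "\<And>c. (\<lambda>q. diffK Gam Gh q X c) differentiable at p" using K_diff[OF p] .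
  note a2 = dd_app[OF U_open p lin2 dL2 K_diff[OF p, of X Y]]
  note a3 = dd_app[OF U_open p lin3 dL3 Gh_diff[OF p, of Z X]]
  note a4 = dd_app[OF U_open p lin4 dL4 Gh_diff[OF p, of Z Y]]
  have d1: "dd (\<lambda>q. diffK Gam Gh q X Y) Z differentiable at p"
    using smooth_diff_at[OF smooth_dd[OF K_smooth] U_open p] .
  have "((\<lambda>q. dd (\<lambda>q. diffK Gam Gh q X Y) Z q + Gh q Z (diffK Gam Gh q X Y)
    - diffK Gam Gh q (Gh q Z X) Y - diffK Gam Gh q X (Gh q Z Y)) has_derivative
    (\<lambda>v. dd (dd (\<lambda>q. diffK Gam Gh q X Y) Z) v p + dd (\<lambda>q. Gh q Z (diffK Gam Gh q X Y)) v p
    - dd (\<lambda>q. diffK Gam Gh q (Gh q Z X) Y) v p - dd (\<lambda>q. diffK Gam Gh q X (Gh q Z Y)) v p)) (at p)"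
    by (intro has_derivative_diff has_derivative_add dd_works d1 a2(2) a3(2) a4(2))
  then have "dd (\<lambda>q. covK Gam Gh q Z X Y) W p = dd (dd (\<lambda>q. diffK Gam Gh q X Y) Z) W p + dd (\<lambda>q. Gh q Z (diffK Gam Gh q X Y)) W p
    - dd (\<lambda>q. diffK Gam Gh q (Gh q Z X) Y) W p - dd (\<lambda>q. diffK Gam Gh q X (Gh q Z Y)) W p"
    unfolding cov_expand by (rule dd_eqI)
  then show ?thesis by (simp add: a2(1) a3(1) a4(1))
qed

lemma drhs:
  assumes p: "p \<in> U"
  shows "dd (\<lambda>q. mu q *\<^sub>R (h q X Y *\<^sub>R Z + h q X Z *\<^sub>R Y + h q Y Z *\<^sub>R X)) W p
    = dd mu W p *\<^sub>R (h p X Y *\<^sub>R Z + h p X Z *\<^sub>R Y + h p Y Z *\<^sub>R X)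
      + mu p *\<^sub>R (dd (\<lambda>q. h q X Y) W p *\<^sub>R Z + dd (\<lambda>q. h q X Z) W p *\<^sub>R Y + dd (\<lambda>q. h q Y Z) W p *\<^sub>R X)"
proof -
  have "((\<lambda>q. mu q *\<^sub>R (h q X Y *\<^sub>R Z + h q X Z *\<^sub>R Y + h q Y Z *\<^sub>R X)) has_derivative
     (\<lambda>v. mu p *\<^sub>R (dd (\<lambda>q. h q X Y) v p *\<^sub>R Z + dd (\<lambda>q. h q X Z) v p *\<^sub>R Y + dd (\<lambda>q. h q Y Z) v p *\<^sub>R X)
       + dd mu v p *\<^sub>R (h p X Y *\<^sub>R Z + h p X Z *\<^sub>R Y + h p Y Z *\<^sub>R X))) (at p)"
    by (intro has_derivative_scaleR has_derivative_add has_derivative_scaleR_left dd_works h_diff[OF p] mu_diff[OF p])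
  from dd_eqI[OF this] show ?thesis by (simp add: add.commute)
qed


lemma lin_cancel:
  fixes S :: "'a::ab_group_add"
  assumes "S + X1 - X2 - X3 = B" "S + Y1 - Y2 - Y3 = B'"
  shows "(X1 - X2 - X3) - (Y1 - Y2 - Y3) = B - B'"
proof -
  have "(X1 - X2 - X3) - (Y1 - Y2 - Y3) = (S + X1 - X2 - X3) - (S + Y1 - Y2 - Y3)" by (simp add: algebra_simps)
  then show ?thesis using assms by simp
qed

lemma drhs_diff:
  assumes p: "p \<in> U"
  shows "(\<lambda>q. mu q *\<^sub>R (h q X Y *\<^sub>R Z + h q X Z *\<^sub>R Y + h q Y Z *\<^sub>R X)) differentiable at p"
  by (intro differentiable_scaleR differentiable_add mu_diff[OF p] h_diff[OF p] differentiable_const)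

lemma ricci:
  assumes p: "p \<in> U"
  shows "(\<lambda>V. (eps * h p Z V) *\<^sub>R W - (eps * h p W V) *\<^sub>R Z - diffK Gam Gh p W (diffK Gam Gh p Z V) + diffK Gam Gh p Z (diffK Gam Gh p W V)) (diffK Gam Gh p X Y)
       - diffK Gam Gh p ((\<lambda>V. (eps * h p Z V) *\<^sub>R W - (eps * h p W V) *\<^sub>R Z - diffK Gam Gh p W (diffK Gam Gh p Z V) + diffK Gam Gh p Z (diffK Gam Gh p W V)) X) Y
       - diffK Gam Gh p X ((\<lambda>V. (eps * h p Z V) *\<^sub>R W - (eps * h p W V) *\<^sub>R Z - diffK Gam Gh p W (diffK Gam Gh p Z V) + diffK Gam Gh p Z (diffK Gam Gh p W V)) Y)
       = dd mu W p *\<^sub>R (h p X Y *\<^sub>R Z + h p X Z *\<^sub>R Y + h p Y Z *\<^sub>R X) - dd mu Z p *\<^sub>R (h p X Y *\<^sub>R W + h p X W *\<^sub>R Y + h p Y W *\<^sub>R X)"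
proof -
  have GamGK: "Gam p a b = Gh p a b + diffK Gam Gh p a b" for a b by (simp add: K_eq)
  have covr: "dd (\<lambda>q. covK Gam Gh q B X Y) A p = dd (\<lambda>q. mu q *\<^sub>R (h q X Y *\<^sub>R B + h q X B *\<^sub>R Y + h q Y B *\<^sub>R X)) A p" for A B
  proof -
    have "dd (\<lambda>q. mu q *\<^sub>R (h q X Y *\<^sub>R B + h q X B *\<^sub>R Y + h q Y B *\<^sub>R X)) A p = dd (\<lambda>q. covK Gam Gh q B X Y) A p"
      by (rule dd_local[OF U_open p _ drhs_diff[OF p]]) (simp add: covK_eq)
    then show ?thesis by simp
  qed
  have sch: "dd (dd (\<lambda>q. diffK Gam Gh q X Y) Z) W p = dd (dd (\<lambda>q. diffK Gam Gh q X Y) W) Z p"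
    using schwarz_smooth[OF K_smooth U_open p] .
  note e1 = covr[of W Z, unfolded dcov[OF p] drhs[OF p]]
  note e2 = covr[of Z W, unfolded dcov[OF p] drhs[OF p]]
  have r5: "Gh p Z (dd (\<lambda>q. diffK Gam Gh q X Y) W p) + dd (\<lambda>q. Gh q Z (diffK Gam Gh p X Y)) W p
      - diffK Gam Gh p (dd (\<lambda>q. Gh q Z X) W p) Y - dd (\<lambda>q. diffK Gam Gh q (Gh p Z X) Y) W p
      - diffK Gam Gh p X (dd (\<lambda>q. Gh q Z Y) W p) - dd (\<lambda>q. diffK Gam Gh q X (Gh p Z Y)) W p
      - (Gh p W (dd (\<lambda>q. diffK Gam Gh q X Y) Z p) + dd (\<lambda>q. Gh q W (diffK Gam Gh p X Y)) Z p
      - diffK Gam Gh p (dd (\<lambda>q. Gh q W X) Z p) Y - dd (\<lambda>q. diffK Gam Gh q (Gh p W X) Y) Z p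
      - diffK Gam Gh p X (dd (\<lambda>q. Gh q W Y) Z p) - dd (\<lambda>q. diffK Gam Gh q X (Gh p W Y)) Z p)
    = (dd mu W p *\<^sub>R (h p X Y *\<^sub>R Z + h p X Z *\<^sub>R Y + h p Y Z *\<^sub>R X)
        + mu p *\<^sub>R (dd (\<lambda>q. h q X Y) W p *\<^sub>R Z + dd (\<lambda>q. h q X Z) W p *\<^sub>R Y + dd (\<lambda>q. h q Y Z) W p *\<^sub>R X))
      - (dd mu Z p *\<^sub>R (h p X Y *\<^sub>R W + h p X W *\<^sub>R Y + h p Y W *\<^sub>R X)
        + mu p *\<^sub>R (dd (\<lambda>q. h q X Y) Z p *\<^sub>R W + dd (\<lambda>q. h q X W) Z p *\<^sub>R Y + dd (\<lambda>q. h q Y W) Z p *\<^sub>R X))"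
    using lin_cancel[OF e2 e1[folded sch]] by (simp add: algebra_simps)
  show ?thesis
  proof (rule ricci_alg[where G="Gh p" and K="diffK Gam Gh p" and h="h p"
      and dG="\<lambda>W A B. dd (\<lambda>q. Gh q A B) W p" and dK="\<lambda>W A B. dd (\<lambda>q. diffK Gam Gh q A B) W p"
      and dGam="\<lambda>W A B. dd (\<lambda>q. Gam q A B) W p" and dh="\<lambda>W A B. dd (\<lambda>q. h q A B) W p"
      and mu="mu p" and T="\<lambda>W. dd mu W p" and C="\<lambda>W A B. h p A B *\<^sub>R W + h p A W *\<^sub>R B + h p B W *\<^sub>R A"])
    show "\<And>a b c. Gh p (a + b) c = Gh p a c + Gh p b c" using linear_add[OF Gh_linear1[OF p]] by simp
    show "\<And>a b c. Gh p c (a + b) = Gh p c a + Gh p c b" using linear_add[OF Gh_linear2[OF p]] by simp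
    show "\<And>r a c. Gh p (r *\<^sub>R a) c = r *\<^sub>R Gh p a c" using linear_scale[OF Gh_linear1[OF p]] by simp
    show "\<And>r a c. Gh p c (r *\<^sub>R a) = r *\<^sub>R Gh p c a" using linear_scale[OF Gh_linear2[OF p]] by simp
    show "\<And>a b c. diffK Gam Gh p (a + b) c = diffK Gam Gh p a c + diffK Gam Gh p b c" using linear_add[OF K_linear1[OF p]] by simp
    show "\<And>a b c. diffK Gam Gh p c (a + b) = diffK Gam Gh p c a + diffK Gam Gh p c b" using linear_add[OF K_linear2[OF p]] by simp
    show "\<And>r a c. diffK Gam Gh p (r *\<^sub>R a) c = r *\<^sub>R diffK Gam Gh p a c" using linear_scale[OF K_linear1[OF p]] by simp
    show "\<And>r a c. diffK Gam Gh p c (r *\<^sub>R a) = r *\<^sub>R diffK Gam Gh p c a" using linear_scale[OF K_linear2[OF p]] by simp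
    show "\<And>a b c. h p (a + b) c = h p a c + h p b c" using linear_add[OF h_linear1[OF p]] by simp
    show "\<And>a b c. h p c (a + b) = h p c a + h p c b" using linear_add[OF h_linear2[OF p]] by simp
    show "\<And>r a c. h p (r *\<^sub>R a) c = r * h p a c" using linear_scale[OF h_linear1[OF p]] by simp
    show "\<And>r a c. h p c (r *\<^sub>R a) = r * h p c a" using linear_scale[OF h_linear2[OF p]] by simp
    show "\<And>a b. Gh p a b = Gh p b a" using LC_torsionfree[OF p] .
    show "\<And>a b. diffK Gam Gh p a b = diffK Gam Gh p b a" using K_sym[OF p] .
    show "\<And>a b. h p a b = h p b a" using h_sym[OF p] .
    show "\<And>W A B. (\<lambda>W A B. h p A B *\<^sub>R W + h p A W *\<^sub>R B + h p B W *\<^sub>R A) W A B = h p A B *\<^sub>R W + h p A W *\<^sub>R B + h p B W *\<^sub>R A"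
      by simp
    show "\<And>W A B. dd (\<lambda>q. diffK Gam Gh q A B) W p = mu p *\<^sub>R (\<lambda>W A B. h p A B *\<^sub>R W + h p A W *\<^sub>R B + h p B W *\<^sub>R A) W A B
        - Gh p W (diffK Gam Gh p A B) + diffK Gam Gh p (Gh p W A) B + diffK Gam Gh p A (Gh p W B)"
    proof -
      fix W A B
      have "covK Gam Gh p W A B = mu p *\<^sub>R (h p A B *\<^sub>R W + h p A W *\<^sub>R B + h p B W *\<^sub>R A)"
        using covK_eq[OF p] .
      then show "dd (\<lambda>q. diffK Gam Gh q A B) W p = mu p *\<^sub>R (\<lambda>W A B. h p A B *\<^sub>R W + h p A W *\<^sub>R B + h p B W *\<^sub>R A) W A B
        - Gh p W (diffK Gam Gh p A B) + diffK Gam Gh p (Gh p W A) B + diffK Gam Gh p A (Gh p W B)"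
        unfolding cov_expand by (simp add: algebra_simps)
    qed
    show "\<And>W A B. dd (\<lambda>q. Gh q A B) W p = dd (\<lambda>q. Gam q A B) W p - dd (\<lambda>q. diffK Gam Gh q A B) W p"
      unfolding K_eq using dd_diff[OF Gam_diff[OF p] Gh_diff[OF p]] by simp
    show "\<And>W Z V. dd (\<lambda>q. Gam q Z V) W p + (Gh p W (Gh p Z V + diffK Gam Gh p Z V) + diffK Gam Gh p W (Gh p Z V + diffK Gam Gh p Z V))
        - (eps * h p Z V) *\<^sub>R W
       = dd (\<lambda>q. Gam q W V) Z p + (Gh p Z (Gh p W V + diffK Gam Gh p W V) + diffK Gam Gh p Z (Gh p W V + diffK Gam Gh p W V))
        - (eps * h p W V) *\<^sub>R Z"
      using gauss_codazzi(1)[OF p] unfolding GamGK .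
    show "\<And>W A B. dd (\<lambda>q. h q A B) W p = h p (Gh p W A) B + h p A (Gh p W B)"
      using LC[OF p] .
    show "Gh p Z (dd (\<lambda>q. diffK Gam Gh q X Y) W p) + dd (\<lambda>q. Gh q Z (diffK Gam Gh p X Y)) W p
      - diffK Gam Gh p (dd (\<lambda>q. Gh q Z X) W p) Y - dd (\<lambda>q. diffK Gam Gh q (Gh p Z X) Y) W p
      - diffK Gam Gh p X (dd (\<lambda>q. Gh q Z Y) W p) - dd (\<lambda>q. diffK Gam Gh q X (Gh p Z Y)) W p
      - (Gh p W (dd (\<lambda>q. diffK Gam Gh q X Y) Z p) + dd (\<lambda>q. Gh q W (diffK Gam Gh p X Y)) Z p
      - diffK Gam Gh p (dd (\<lambda>q. Gh q W X) Z p) Y - dd (\<lambda>q. diffK Gam Gh q (Gh p W X) Y) Z p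
      - diffK Gam Gh p X (dd (\<lambda>q. Gh q W Y) Z p) - dd (\<lambda>q. diffK Gam Gh q X (Gh p W Y)) Z p)
    = (dd mu W p *\<^sub>R (\<lambda>W A B. h p A B *\<^sub>R W + h p A W *\<^sub>R B + h p B W *\<^sub>R A) Z X Y
        + mu p *\<^sub>R (dd (\<lambda>q. h q X Y) W p *\<^sub>R Z + dd (\<lambda>q. h q X Z) W p *\<^sub>R Y + dd (\<lambda>q. h q Y Z) W p *\<^sub>R X))
      - (dd mu Z p *\<^sub>R (\<lambda>W A B. h p A B *\<^sub>R W + h p A W *\<^sub>R B + h p B W *\<^sub>R A) W X Y
        + mu p *\<^sub>R (dd (\<lambda>q. h q X Y) Z p *\<^sub>R W + dd (\<lambda>q. h q X W) Z p *\<^sub>R Y + dd (\<lambda>q. h q Y W) Z p *\<^sub>R X))"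
      using r5 by simp
  qed
qed


lemma final:
  fixes p :: "real^'n" and e :: "nat \<Rightarrow> real^'n" and lam :: "nat \<Rightarrow> real"
  assumes p: "p \<in> U"
    and dmu_p: "\<exists>v. frechet_derivative mu (at p) v \<noteq> 0"
    and e_orthonormal: "\<And>i j. i \<in> {1..CARD('n)} \<Longrightarrow> j \<in> {1..CARD('n)} \<Longrightarrow>
        h p (e i) (e j) = (if i = j then 1 else 0)"
    and eigen: "\<And>i. i \<in> {1..CARD('n)} \<Longrightarrow> diffK Gam Gh p (e 1) (e i) = lam i *\<^sub>R e i"
  shows "diffK Gam Gh p (e 1) (e 1) = lam 1 *\<^sub>R e 1
    \<and> (\<forall>i\<in>{2..CARD('n)}. diffK Gam Gh p (e 1) (e i) = lam i *\<^sub>R e i)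
    \<and> (\<forall>i\<in>{2..CARD('n)}. \<forall>j\<in>{2..CARD('n)}.
          diffK Gam Gh p (e i) (e j) = (if i = j then lam i else 0) *\<^sub>R e 1)"
proof -
  define n where "n = CARD('n)"
  have one: "1 \<in> {1..n}" unfolding n_def using zero_less_card_finite by (simp add: Suc_le_eq)
  note hl = linear_add[OF h_linear1[OF p]] linear_add[OF h_linear2[OF p]]
    linear_scale[OF h_linear1[OF p]] linear_scale[OF h_linear2[OF p]]
    linear_diff[OF h_linear1[OF p]] linear_diff[OF h_linear2[OF p]]
    linear_neg[OF h_linear1[OF p]] linear_neg[OF h_linear2[OF p]]
  note Kl = linear_add[OF K_linear1[OF p]] linear_add[OF K_linear2[OF p]]
    linear_scale[OF K_linear1[OF p]] linear_scale[OF K_linear2[OF p]]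
    linear_diff[OF K_linear1[OF p]] linear_diff[OF K_linear2[OF p]]
    linear_neg[OF K_linear1[OF p]] linear_neg[OF K_linear2[OF p]]
  have hb: "\<And>i j. i \<in> {1..n} \<Longrightarrow> j \<in> {1..n} \<Longrightarrow> h p (e i) (e j) = (if i = j then 1 else 0)"
    using e_orthonormal unfolding n_def by blast
  have eig: "\<And>i. i \<in> {1..n} \<Longrightarrow> diffK Gam Gh p (e 1) (e i) = lam i *\<^sub>R e i"
    using eigen unfolding n_def by blast
  have eigR: "\<And>i. i \<in> {1..n} \<Longrightarrow> diffK Gam Gh p (e i) (e 1) = lam i *\<^sub>R e i"
    using eig K_sym[OF p] by metis
  have hK1: "\<And>u l. l \<in> {1..n} \<Longrightarrow> h p (diffK Gam Gh p (e 1) u) (e l) = lam l * h p u (e l)"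
  proof -
    fix u l assume l: "l \<in> {1..n}"
    have "h p (diffK Gam Gh p (e 1) u) (e l) = h p (diffK Gam Gh p u (e 1)) (e l)" using K_sym[OF p] by metis
    also have "\<dots> = h p (diffK Gam Gh p (e l) (e 1)) u" using K_tsym[OF p] .
    also have "\<dots> = lam l * h p u (e l)" using eigR[OF l] hl h_sym[OF p] by simp
    finally show "h p (diffK Gam Gh p (e 1) u) (e l) = lam l * h p u (e l)" .
  qed
  have hK1': "\<And>u l. l \<in> {1..n} \<Longrightarrow> h p (diffK Gam Gh p u (e 1)) (e l) = lam l * h p u (e l)"
    using hK1 K_sym[OF p] by metis
  define e1 where "e1 = e 1"
  define l1 where "l1 = lam 1"
  have h11: "h p e1 e1 = 1" using hb[OF one one] unfolding e1_def by simp
  have h1i: "\<And>i. i \<in> {2..n} \<Longrightarrow> h p e1 (e i) = 0" "\<And>i. i \<in> {2..n} \<Longrightarrow> h p (e i) e1 = 0"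
    using hb one unfolding e1_def by auto
  have hii: "\<And>i. i \<in> {2..n} \<Longrightarrow> h p (e i) (e i) = 1" using hb by auto
  have eig1: "diffK Gam Gh p e1 e1 = l1 *\<^sub>R e1" using eig[OF one] unfolding e1_def l1_def .
  have eigi: "\<And>i. i \<in> {2..n} \<Longrightarrow> diffK Gam Gh p e1 (e i) = lam i *\<^sub>R e i"
    "\<And>i. i \<in> {2..n} \<Longrightarrow> diffK Gam Gh p (e i) e1 = lam i *\<^sub>R e i"
    using eig eigR unfolding e1_def by auto
  have hKe: "\<And>u. h p (diffK Gam Gh p e1 u) e1 = l1 * h p u e1" "\<And>u. h p (diffK Gam Gh p u e1) e1 = l1 * h p u e1"
    using hK1[OF one] hK1'[OF one] unfolding e1_def l1_def by auto
  have hKi: "\<And>u i. i \<in> {2..n} \<Longrightarrow> h p (diffK Gam Gh p e1 u) (e i) = lam i * h p u (e i)"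
    "\<And>u i. i \<in> {2..n} \<Longrightarrow> h p (diffK Gam Gh p u e1) (e i) = lam i * h p u (e i)"
    using hK1 hK1' unfolding e1_def by auto
  have T1: "dd mu Z p = dd mu e1 p * h p Z e1" for Z
  proof -
    note R = ricci[OF p, where W="e1" and Z=Z and X="e1" and Y="e1"]
    note E = arg_cong[OF R, where f="\<lambda>v. h p v e1"]
    have hz: "h p e1 Z = h p Z e1" using h_sym[OF p] by metis
    have E2: "dd mu Z p * 3 = dd mu e1 p * (3 * h p Z e1)"
      using E by (simp only: hl Kl h11 eig1 hKe hz) (simp add: algebra_simps)
    then show ?thesis by simp
  qed
  define t where "t = dd mu e1 p"
  have Ti: "\<And>i. i \<in> {2..n} \<Longrightarrow> dd mu (e i) p = 0"
  proof -
    fix i assume i: "i \<in> {2..n}"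
    show "dd mu (e i) p = 0" using T1[of "e i"] h1i(2)[OF i] by simp
  qed
  have S2: "(l1 - 2 * lam i) * (lam i * (l1 - lam i) - eps) = t" if i: "i \<in> {2..n}" for i
  proof -
    note R = ricci[OF p, where W="e1" and Z="e i" and X="e1" and Y="e1"]
    note E = arg_cong[OF R, where f="\<lambda>v. h p v (e i)"]
    show ?thesis
      using E by (simp only: hl Kl h11 h1i[OF i] hii[OF i] eig1 eigi[OF i] hKi[OF i] Ti[OF i] t_def[symmetric]) (simp add: algebra_simps)
  qed
  have S3: "(lam j - lam k) * (l1 - 2 * lam l) * h p (diffK Gam Gh p (e j) (e k)) (e l) = 0"
    if j: "j \<in> {2..n}" and k: "k \<in> {2..n}" and l: "l \<in> {2..n}" for j k l
  proof -
    note R = ricci[OF p, where W="e j" and Z="e k" and X="e1" and Y="e1"]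
    note E = arg_cong[OF R, where f="\<lambda>v. h p v (e l)"]
    have kj: "diffK Gam Gh p (e k) (e j) = diffK Gam Gh p (e j) (e k)" using K_sym[OF p] by metis
    show ?thesis
      using E by (simp only: hl Kl h11 h1i[OF j] h1i[OF k] h1i[OF l] eig1 eigi[OF j] eigi[OF k] hKi[OF l] Ti[OF j] Ti[OF k] kj) (simp add: algebra_simps)
  qed
  have S4: "((lam j - lam k)^2 - (lam i * (l1 - lam i) - eps)) * h p (diffK Gam Gh p (e i) (e j)) (e k) = 0"
    if i: "i \<in> {2..n}" and j: "j \<in> {2..n}" and k: "k \<in> {2..n}" for i j k
  proof -
    note R = ricci[OF p, where W="e1" and Z="e i" and X="e1" and Y="e j"]
    note E = arg_cong[OF R, where f="\<lambda>v. h p v (e k)"]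
    show ?thesis
      using E by (simp only: hl Kl h11 h1i[OF i] h1i[OF j] h1i[OF k] hii[OF i] eig1 eigi[OF i] eigi[OF j] hKi[OF k] Ti[OF i] t_def[symmetric]) (simp add: algebra_simps power2_eq_square)
  qed
  have t0: "t \<noteq> 0"
  proof
    assume "t = 0"
    obtain v where "frechet_derivative mu (at p) v \<noteq> 0" using dmu_p by blast
    then have "dd mu v p \<noteq> 0" unfolding dd_def .
    then show False using T1[of v] \<open>t = 0\<close> unfolding t_def by simp
  qed
  have nz: "l1 - 2 * lam i \<noteq> 0" "lam i * (l1 - lam i) - eps \<noteq> 0" if i: "i \<in> {2..n}" for i
    using S2[OF i] t0 by auto
  have b0: "h p (diffK Gam Gh p (e i) (e j)) (e k) = 0"
    if i: "i \<in> {2..n}" and j: "j \<in> {2..n}" and k: "k \<in> {2..n}" for i j k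
  proof -
    have sym: "h p (diffK Gam Gh p (e j) (e k)) (e i) = h p (diffK Gam Gh p (e i) (e j)) (e k)"
      by (metis K_tsym[OF p] K_sym[OF p])
    have a: "(lam j - lam k) * h p (diffK Gam Gh p (e i) (e j)) (e k) = 0"
      using S3[OF j k i] nz(1)[OF i] unfolding sym by simp
    define b where "b = h p (diffK Gam Gh p (e i) (e j)) (e k)"
    define c where "c = lam i * (l1 - lam i) - eps"
    define d where "d = lam j - lam k"
    have a': "d * b = 0" using a unfolding b_def d_def .
    have s4: "(d^2 - c) * b = 0" using S4[OF i j k] unfolding b_def c_def d_def .
    have "c * b = d * (d * b) - (d^2 - c) * b" by (simp add: algebra_simps power2_eq_square)
    then have "c * b = 0" using a' s4 by simp
    then show ?thesis using nz(2)[OF i] unfolding b_def c_def by simp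
  qed
  have nn: "1 \<le> n" using one by simp
  have main: "diffK Gam Gh p (e i) (e j) = (if i = j then lam i else 0) *\<^sub>R e 1"
    if i: "i \<in> {2..n}" and j: "j \<in> {2..n}" for i j
  proof -
    let ?v = "diffK Gam Gh p (e i) (e j)"
    have ex: "?v = (\<Sum>k\<in>{1..n}. h p ?v (e k) *\<^sub>R e k)"
      unfolding n_def
      by (rule onb_expand[OF h_linear1[OF p] h_linear2[OF p] h_posdef[OF p] e_orthonormal])
    also have "\<dots> = h p ?v (e 1) *\<^sub>R e 1 + (\<Sum>k\<in>{Suc 1..n}. h p ?v (e k) *\<^sub>R e k)"
      by (rule sum.atLeast_Suc_atMost[OF nn])
    also have "(\<Sum>k\<in>{Suc 1..n}. h p ?v (e k) *\<^sub>R e k) = 0"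
      by (rule sum.neutral) (use b0[OF i j] in auto)
    also have "h p ?v (e 1) = (if i = j then lam i else 0)"
    proof -
      have "h p ?v (e 1) = h p (diffK Gam Gh p (e 1) (e j)) (e i)" using K_tsym[OF p] .
      also have "\<dots> = lam j * h p (e j) (e i)" using eig[of j] j hl by auto
      also have "\<dots> = (if i = j then lam i else 0)" using hb[of j i] i j by auto
      finally show ?thesis .
    qed
    finally show ?thesis by simp
  qed
  show ?thesis
    using eigen main one unfolding n_def by auto
qed

end


theorem lemma4p2:
  fixes U :: "(real^'n) set"
    and x :: "real^'n \<Rightarrow> real^'m"
    and eps :: real
    and h :: "real^'n \<Rightarrow> real^'n \<Rightarrow> real^'n \<Rightarrow> real"
    and Gam Gh :: "real^'n \<Rightarrow> real^'n \<Rightarrow> real^'n \<Rightarrow> real^'n"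
    and mu :: "real^'n \<Rightarrow> real"
    and p :: "real^'n"
    and e :: "nat \<Rightarrow> real^'n"
    and lam :: "nat \<Rightarrow> real"
  assumes dim: "CARD('m) = CARD('n) + 1"
    and U_open: "open U"
    and x_smooth: "smooth_on U x"
    and transversal: "\<And>q v c. q \<in> U \<Longrightarrow>
        frechet_derivative x (at q) v + c *\<^sub>R x q = 0 \<Longrightarrow> v = 0 \<and> c = 0"
    and eps_pm: "eps = 1 \<or> eps = -1"
    and structure_eq: "\<And>q X Y. q \<in> U \<Longrightarrow>
        frechet_derivative (\<lambda>r. frechet_derivative x (at r) Y) (at q) X
          = frechet_derivative x (at q) (Gam q X Y) + h q X Y *\<^sub>R (- eps *\<^sub>R x q)"
    and h_smooth: "\<And>X Y. smooth_on U (\<lambda>q. h q X Y)"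
    and Gam_smooth: "\<And>X Y. smooth_on U (\<lambda>q. Gam q X Y)"
    and Gh_smooth: "\<And>X Y. smooth_on U (\<lambda>q. Gh q X Y)"
    and h_posdef: "\<And>q X. q \<in> U \<Longrightarrow> X \<noteq> 0 \<Longrightarrow> h q X X > 0"
    and LC_torsionfree: "\<And>q X Y. q \<in> U \<Longrightarrow> Gh q X Y = Gh q Y X"
    and LC_metric: "\<And>q X Y Z. q \<in> U \<Longrightarrow>
        frechet_derivative (\<lambda>r. h r X Y) (at q) Z = h q (Gh q Z X) Y + h q X (Gh q Z Y)"
    and mu_smooth: "smooth_on U mu"
    and mu_nonconst: "\<not> (\<exists>c. \<forall>q\<in>U. mu q = c)"
    and covK_eq: "\<And>q X Y Z. q \<in> U \<Longrightarrow>
        covK Gam Gh q Z X Y = mu q *\<^sub>R (h q X Y *\<^sub>R Z + h q X Z *\<^sub>R Y + h q Y Z *\<^sub>R X)"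
    and p_in: "p \<in> U"
    and dmu_p: "\<exists>v. frechet_derivative mu (at p) v \<noteq> 0"
    and e_orthonormal: "\<And>i j. i \<in> {1..CARD('n)} \<Longrightarrow> j \<in> {1..CARD('n)} \<Longrightarrow>
        h p (e i) (e j) = (if i = j then 1 else 0)"
    and e1_max: "\<And>u. h p u u = 1 \<Longrightarrow>
        h p (diffK Gam Gh p u u) u \<le> h p (diffK Gam Gh p (e 1) (e 1)) (e 1)"
    and eigen: "\<And>i. i \<in> {1..CARD('n)} \<Longrightarrow> diffK Gam Gh p (e 1) (e i) = lam i *\<^sub>R e i"
    and lam_ineq: "\<And>i. i \<in> {2..CARD('n)} \<Longrightarrow> lam 1 \<ge> 2 * lam i"
    and lam_eq: "\<And>i. i \<in> {2..CARD('n)} \<Longrightarrow> lam 1 = 2 * lam i \<Longrightarrow>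
        h p (diffK Gam Gh p (e i) (e i)) (e i) = 0"
  shows "diffK Gam Gh p (e 1) (e 1) = lam 1 *\<^sub>R e 1
    \<and> (\<forall>i\<in>{2..CARD('n)}. diffK Gam Gh p (e 1) (e i) = lam i *\<^sub>R e i)
    \<and> (\<forall>i\<in>{2..CARD('n)}. \<forall>j\<in>{2..CARD('n)}.
          diffK Gam Gh p (e i) (e j) = (if i = j then lam i else 0) *\<^sub>R e 1)"
  proof -
  interpret ca U x eps h Gam Gh mu
    by standard (fact U_open x_smooth transversal eps_pm structure_eq h_smooth Gam_smooth Gh_smooth
        h_posdef LC_torsionfree LC_metric mu_smooth covK_eq)+
  show ?thesis using final[OF p_in dmu_p e_orthonormal eigen] .
qed

end
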